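(* Assume that $R,\dot R,\ddot R,\dddot R$ satisfy the bicolored tetrahedron equations for every $\sigma\in\mathbb{Z}/2\mathbb{Z}$ and all spectral parameters, that $\dddot R^{[\sigma]}(r_1,r_2,r_3)$ is invertible for all $\sigma$ and all $r_1,r_2,r_3\in C$, and that for every $\sigma$ and all parameters of two planes $3<4$ (larger than all $1_l$ and $2_m$) the trace reduction $\ddot{\mathbf R}^{[\sigma]}_{34}$ is invertible. Then for all $\sigma\in\mathbb{Z}/2\mathbb{Z}$ and all $r,r'\in C$, $$T^{[\sigma]}(r)\,\dot T^{[\sigma+1]}(r')=\dot T^{[\sigma]}(r')\,T^{[\sigma+1]}(r)$$ as operators on $W=\bigotimes_{l,m}V_{(1_l2_m)}$.
   Context: Let $V$ be a finite-dimensional complex vector space and $C$ a set (of spectral parameters). Let $R,\dot R,\ddot R,\dddot R:\mathbb{Z}/2\mathbb{Z}\times C^3\to\mathrm{End}(V\otimes V\otimes V)$ be maps; write $X^{[\sigma]}(r_1,r_2,r_3)$ for the value of $X\in\{R,\dot R,\ddot R,\dddot R\}$ at $(\sigma,r_1,r_2,r_3)$. Superscript colors $[\sigma]$ are always read modulo 2. Notation: consider a finite totally ordered set of "planes", each plane $\alpha$ carrying a parameter $r_\alpha\in C$. For each pair $\alpha<\beta$ let $V_{(\alpha\beta)}$ be a copy of $V$. For $\alpha<\beta<\gamma$, $X^{[\sigma]}_{(\alpha\beta\gamma)}$ denotes the operator on the tensor product of all the spaces $V_{(\cdot\cdot)}$ under consideration that acts as $X^{[\sigma]}(r_\alpha,r_\beta,r_\gamma)$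 on $V_{(\alpha\beta)}\otimes V_{(\alpha\gamma)}\otimes V_{(\beta\gamma)}$ (in this order) and as the identity on all other factors. Bicolored tetrahedron equations (BTE$[\sigma]$): for any four planes $1<2<3<4$ with arbitrary parameters $r_1,r_2,r_3,r_4\in C$, on $V_{(12)}\otimes V_{(13)}\otimes V_{(14)}\otimes V_{(23)}\otimes V_{(24)}\otimes V_{(34)}$, $$R^{[\sigma]}_{(123)}\dot R^{[\sigma+1]}_{(124)}\ddot R^{[\sigma]}_{(134)}\dddot R^{[\sigma+1]}_{(234)}=\dddot R^{[\sigma]}_{(234)}\ddot R^{[\sigma+1]}_{(134)}\dot R^{[\sigma]}_{(124)}R^{[\sigma+1]}_{(123)}.$$ Fix integers $L,M\ge1$, planes $1_1<\dots<1_{2L}<2_1<\dots<2_{2M}$ with fixed arbitrary parameters $r_{1_l},r_{2_m}\in C$. Trace reduction: for planes $\alpha<\beta$ larger than all $1_l$, define $$\mathbf{R}^{[\sigma]}_{\alpha\beta}:=\mathrm{Tr}_{V_{(\alpha\beta)}}\Bigl(R^{[\sigma+1]}_{(1_1\alpha\beta)}R^{[\sigma+2]}_{(1_2\alpha\beta)}\cdots R^{[\sigma+2L]}_{(1_{2L}\alpha\beta)}\Bigr)$$ (partial trace over $V_{(\alpha\beta)}$), an operator on $\bigotimes_l(V_{(1_l\alpha)}\otimes V_{(1_l\beta)})$; $\dot{\mathbf R},\ddot{\mathbf R}$ are defined likewise from $\dot R,\ddot R$. Layer transfer matrix: for $r\in C$, let $3$ be an extra plane larger than all $2_m$ with parameter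 $r_3=r$, and set $$T^{[\sigma]}(r):=\mathrm{Tr}_{\bigotimes_l V_{(1_l3)}}\Bigl(\mathbf R^{[\sigma+1]}_{2_1 3}\,\mathbf R^{[\sigma+2]}_{2_2 3}\cdots\mathbf R^{[\sigma+2M]}_{2_{2M}3}\Bigr),$$ an operator on $W=\bigotimes_{l,m}V_{(1_l2_m)}$ (it depends only on $r$, not on the label of the extra plane). $\dot T^{[\sigma]}(r)$ is defined the same way with $\mathbf R$ replaced by $\dot{\mathbf R}$. *)

theory Defs
  imports "HOL-Analysis.Analysis" "HOL-Library.Z2" "HOL-Library.FuncSet"
begin

text \<open>Colors live in Z/2Z, modelled by the two-element field bit.
  V is modelled as C^'b for a finite basis type 'b; an operator on a tensor product
  of copies of V indexed by a finite set S of slots is given by its matrix entries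
  A x y (out-configuration x, in-configuration y), where configurations are
  extensional functions S \<rightarrow>E UNIV.\<close>

type_synonym 'b op3 = "'b \<times> 'b \<times> 'b \<Rightarrow> 'b \<times> 'b \<times> 'b \<Rightarrow> complex"
type_synonym ('c, 'b) Rfam = "bit \<Rightarrow> 'c \<Rightarrow> 'c \<Rightarrow> 'c \<Rightarrow> 'b op3"
type_synonym ('s, 'b) sop = "('s \<Rightarrow> 'b) \<Rightarrow> ('s \<Rightarrow> 'b) \<Rightarrow> complex"

text \<open>Planes: A l = 1_(l+1), B m = 2_(m+1), E k = extra planes (larger than all A, B).\<close>
datatype plane = A nat | B nat | E nat

type_synonym slot = "plane \<times> plane"

definition cfg :: "'s set \<Rightarrow> ('s \<Rightarrow> 'b) set" where
  "cfg S = S \<rightarrow>\<^sub>E UNIV"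

definition op_eq :: "'s set \<Rightarrow> ('s, 'b) sop \<Rightarrow> ('s, 'b) sop \<Rightarrow> bool" where
  "op_eq S X Y \<longleftrightarrow> (\<forall>x\<in>cfg S. \<forall>y\<in>cfg S. X x y = Y x y)"

definition op_id :: "'s set \<Rightarrow> ('s, 'b) sop" where
  "op_id S = (\<lambda>x y. if x = y then 1 else 0)"

definition op_mult :: "'s set \<Rightarrow> ('s, 'b::finite) sop \<Rightarrow> ('s, 'b) sop \<Rightarrow> ('s, 'b) sop" where
  "op_mult S X Y = (\<lambda>x y. \<Sum>z\<in>cfg S. X x z * Y z y)"

definition op_prod :: "'s set \<Rightarrow> ('s, 'b::finite) sop list \<Rightarrow> ('s, 'b) sop" where
  "op_prod S Xs = foldr (op_mult S) Xs (op_id S)"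

definition op_invertible :: "'s set \<Rightarrow> ('s, 'b::finite) sop \<Rightarrow> bool" where
  "op_invertible S X \<longleftrightarrow> (\<exists>Y. op_eq S (op_mult S X Y) (op_id S) \<and> op_eq S (op_mult S Y X) (op_id S))"

definition op3_on :: "'s \<times> 's \<times> 's \<Rightarrow> 'b op3 \<Rightarrow> ('s, 'b) sop" where
  "op3_on s X = (case s of (s1, s2, s3) \<Rightarrow>
     (\<lambda>x y. X (x s1, x s2, x s3) (y s1, y s2, y s3)))"

definition embed :: "'s set \<Rightarrow> 's set \<Rightarrow> ('s, 'b) sop \<Rightarrow> ('s, 'b) sop" where
  "embed S T X = (\<lambda>x y. X (restrict x T) (restrict y T) *
     (if \<forall>s\<in>S - T. x s = y s then 1 else 0))"

definition ptrace :: "'s set \<Rightarrow> 's set \<Rightarrow> ('s, 'b::finite) sop \<Rightarrow> ('s, 'b) sop" where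
  "ptrace S T X = (\<lambda>x y. \<Sum>z\<in>cfg T.
     X (\<lambda>s. if s \<in> T then z s else x s) (\<lambda>s. if s \<in> T then z s else y s))"

definition loc :: "slot set \<Rightarrow> ('c, 'b) Rfam \<Rightarrow> bit \<Rightarrow> plane \<Rightarrow> plane \<Rightarrow> plane
    \<Rightarrow> 'c \<Rightarrow> 'c \<Rightarrow> 'c \<Rightarrow> (slot, 'b) sop" where
  "loc S X \<sigma> a b c ra rb rc =
     embed S {(a, b), (a, c), (b, c)} (op3_on ((a, b), (a, c), (b, c)) (X \<sigma> ra rb rc))"

definition S6 :: "slot set" where
  "S6 = {(E i, E j) | i j. 1 \<le> i \<and> i < j \<and> j \<le> 4}"

definition BTE :: "('c, 'b::finite) Rfam \<Rightarrow> ('c, 'b) Rfam \<Rightarrow> ('c, 'b) Rfam \<Rightarrow> ('c, 'b) Rfam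
    \<Rightarrow> bit \<Rightarrow> bool" where
  "BTE R R1 R2 R3 \<sigma> \<longleftrightarrow> (\<forall>r1 r2 r3 r4.
     op_eq S6
       (op_prod S6 [loc S6 R \<sigma> (E 1) (E 2) (E 3) r1 r2 r3,
                    loc S6 R1 (\<sigma> + 1) (E 1) (E 2) (E 4) r1 r2 r4,
                    loc S6 R2 \<sigma> (E 1) (E 3) (E 4) r1 r3 r4,
                    loc S6 R3 (\<sigma> + 1) (E 2) (E 3) (E 4) r2 r3 r4])
       (op_prod S6 [loc S6 R3 \<sigma> (E 2) (E 3) (E 4) r2 r3 r4,
                    loc S6 R2 (\<sigma> + 1) (E 1) (E 3) (E 4) r1 r3 r4,
                    loc S6 R1 \<sigma> (E 1) (E 2) (E 4) r1 r2 r4,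
                    loc S6 R (\<sigma> + 1) (E 1) (E 2) (E 3) r1 r2 r3]))"

definition invertible3 :: "'b::finite op3 \<Rightarrow> bool" where
  "invertible3 X \<longleftrightarrow> (\<exists>Y. (\<forall>x y. (\<Sum>z\<in>UNIV. X x z * Y z y) = (if x = y then 1 else 0)) \<and>
                          (\<forall>x y. (\<Sum>z\<in>UNIV. Y x z * X z y) = (if x = y then 1 else 0)))"

definition Rsl :: "nat \<Rightarrow> plane \<Rightarrow> plane \<Rightarrow> slot set" where
  "Rsl L \<alpha> \<beta> = {(A l, \<alpha>) | l. l < 2 * L} \<union> {(A l, \<beta>) | l. l < 2 * L}"

definition boldR :: "('c, 'b::finite) Rfam \<Rightarrow> nat \<Rightarrow> (nat \<Rightarrow> 'c) \<Rightarrow> bit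
    \<Rightarrow> plane \<Rightarrow> plane \<Rightarrow> 'c \<Rightarrow> 'c \<Rightarrow> (slot, 'b) sop" where
  "boldR X L rA \<sigma> \<alpha> \<beta> ra rb =
     (let S = Rsl L \<alpha> \<beta> \<union> {(\<alpha>, \<beta>)} in
      ptrace S {(\<alpha>, \<beta>)}
        (op_prod S (map (\<lambda>l. loc S X (\<sigma> + of_nat (l + 1)) (A l) \<alpha> \<beta> (rA l) ra rb) [0..<2 * L])))"

definition Wsl :: "nat \<Rightarrow> nat \<Rightarrow> slot set" where
  "Wsl L M = {(A l, B m) | l m. l < 2 * L \<and> m < 2 * M}"

text \<open>Layer transfer matrix T^[sigma](r), extra plane 3 = E 0.\<close>
definition Tlayer :: "('c, 'b::finite) Rfam \<Rightarrow> nat \<Rightarrow> nat \<Rightarrow> (nat \<Rightarrow> 'c) \<Rightarrow> (nat \<Rightarrow> 'c)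
    \<Rightarrow> bit \<Rightarrow> 'c \<Rightarrow> (slot, 'b) sop" where
  "Tlayer X L M rA rB \<sigma> r =
     (let Tr = {(A l, E 0) | l. l < 2 * L}; S = Wsl L M \<union> Tr in
      ptrace S Tr
        (op_prod S (map (\<lambda>m. embed S (Rsl L (B m) (E 0))
                      (boldR X L rA (\<sigma> + of_nat (m + 1)) (B m) (E 0) (rB m) r)) [0..<2 * M])))"

end

theory Submission
  imports Defs
begin

definition mrg :: "'s set \<Rightarrow> ('s \<Rightarrow> 'b) \<Rightarrow> ('s \<Rightarrow> 'b) \<Rightarrow> ('s \<Rightarrow> 'b)" where
  "mrg T x z = (\<lambda>s. if s \<in> T then z s else x s)"

lemma cfg_iff: "x \<in> cfg S \<longleftrightarrow> (\<forall>s. s \<notin> S \<longrightarrow> x s = undefined)"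
  by (auto simp: cfg_def PiE_def extensional_def)

lemma finite_cfg[simp]: "finite S \<Longrightarrow> finite (cfg S :: ('s \<Rightarrow> 'b::finite) set)"
  unfolding cfg_def by (intro finite_PiE) auto

lemma mrg_cfg: "x \<in> cfg S \<Longrightarrow> z \<in> cfg T \<Longrightarrow> T \<subseteq> S \<Longrightarrow> mrg T x z \<in> cfg S"
  by (auto simp: cfg_iff mrg_def)

lemma mrg_cfg2: "x \<in> cfg (S - T) \<Longrightarrow> z \<in> cfg T \<Longrightarrow> T \<subseteq> S \<Longrightarrow> mrg T x z \<in> cfg S"
  by (auto simp: cfg_iff mrg_def)

lemma restrict_cfg: "restrict x T \<in> cfg T"
  by (auto simp: cfg_iff)

lemma cfg_subset: "x \<in> cfg S' \<Longrightarrow> S' \<subseteq> S \<Longrightarrow> x \<in> cfg S"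
  by (auto simp: cfg_iff)

lemma restrict_mrg_T: "z \<in> cfg T \<Longrightarrow> restrict (mrg T x z) T = z"
  by (auto simp: cfg_iff mrg_def fun_eq_iff)

lemma restrict_cfg_id: "x \<in> cfg S \<Longrightarrow> restrict x S = x"
  by (auto simp: cfg_iff fun_eq_iff)

lemma sum_cfg_split:
  fixes f :: "('s \<Rightarrow> 'b::finite) \<Rightarrow> 'a::comm_monoid_add"
  assumes "finite S" "T \<subseteq> S"
  shows "(\<Sum>w\<in>cfg S. f w) = (\<Sum>x\<in>cfg (S - T). \<Sum>z\<in>cfg T. f (mrg T x z))"
proof -
  have bij: "bij_betw (\<lambda>(x, z). mrg T x z) (cfg (S - T) \<times> cfg T) (cfg S)"
  proof (rule bij_betw_byWitness[where f' = "\<lambda>w. (restrict w (S - T), restrict w T)"])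
    show "\<forall>a\<in>cfg (S - T) \<times> cfg T. (\<lambda>w. (restrict w (S - T), restrict w T)) ((\<lambda>(x, z). mrg T x z) a) = a"
      by (auto simp: cfg_iff mrg_def fun_eq_iff)
    show "\<forall>a'\<in>cfg S. (\<lambda>(x, z). mrg T x z) (restrict a' (S - T), restrict a' T) = a'"
      using assms by (auto simp: cfg_iff mrg_def fun_eq_iff)
    show "(\<lambda>(x, z). mrg T x z) ` (cfg (S - T) \<times> cfg T) \<subseteq> cfg S"
      using assms by (auto intro: mrg_cfg2)
    show "(\<lambda>w. (restrict w (S - T), restrict w T)) ` cfg S \<subseteq> cfg (S - T) \<times> cfg T"
      by (auto simp: restrict_cfg)
  qed
  have "(\<Sum>w\<in>cfg S. f w) = (\<Sum>p\<in>cfg (S - T) \<times> cfg T. f ((\<lambda>(x, z). mrg T x z) p))"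
    using sum.reindex_bij_betw[OF bij, of f] by simp
  also have "\<dots> = (\<Sum>x\<in>cfg (S - T). \<Sum>z\<in>cfg T. f (mrg T x z))"
    using assms by (subst sum.cartesian_product) (auto simp: finite_subset split_def)
  finally show ?thesis .
qed

lemma sum_cfg_collapse:
  fixes f :: "('s \<Rightarrow> 'b::finite) \<Rightarrow> 'a::comm_semiring_1"
  assumes "finite S" "T \<subseteq> S" "y \<in> cfg S"
  shows "(\<Sum>w\<in>cfg S. f w * (if \<forall>s\<in>S - T. w s = y s then 1 else 0)) = (\<Sum>z\<in>cfg T. f (mrg T y z))"
proof -
  let ?x0 = "restrict y (S - T)"
  have x0: "?x0 \<in> cfg (S - T)" by (rule restrict_cfg)
  have eq: "\<And>x z. x \<in> cfg (S - T) \<Longrightarrow> z \<in> cfg T \<Longrightarrow> (\<forall>s\<in>S - T. mrg T x z s = y s) \<longleftrightarrow> x = ?x0"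
    by (auto simp: cfg_iff mrg_def fun_eq_iff)
  have m: "\<And>z. z \<in> cfg T \<Longrightarrow> mrg T ?x0 z = mrg T y z"
    using assms by (auto simp: cfg_iff mrg_def fun_eq_iff)
  have "(\<Sum>w\<in>cfg S. f w * (if \<forall>s\<in>S - T. w s = y s then 1 else 0))
      = (\<Sum>x\<in>cfg (S - T). \<Sum>z\<in>cfg T. f (mrg T x z) * (if \<forall>s\<in>S - T. mrg T x z s = y s then 1 else 0))"
    by (rule sum_cfg_split[OF assms(1,2)])
  also have "\<dots> = (\<Sum>x\<in>cfg (S - T). if x = ?x0 then (\<Sum>z\<in>cfg T. f (mrg T x z)) else 0)"
    by (rule sum.cong[OF refl]) (auto simp: eq intro!: sum.neutral)
  also have "\<dots> = (\<Sum>z\<in>cfg T. f (mrg T ?x0 z))"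
    using x0 assms by (subst sum.delta) (auto simp: finite_subset)
  also have "\<dots> = (\<Sum>z\<in>cfg T. f (mrg T y z))"
    by (rule sum.cong) (auto simp: m)
  finally show ?thesis .
qed

lemma op_eq_refl[simp]: "op_eq S X X" by (simp add: op_eq_def)
lemma op_eq_sym: "op_eq S X Y \<Longrightarrow> op_eq S Y X" by (simp add: op_eq_def)
lemma op_eq_trans[trans]: "op_eq S X Y \<Longrightarrow> op_eq S Y Z \<Longrightarrow> op_eq S X Z" by (simp add: op_eq_def)
lemma op_eq_subset: "op_eq S X Y \<Longrightarrow> S' \<subseteq> S \<Longrightarrow> op_eq S' X Y"
  by (auto simp: op_eq_def intro: cfg_subset)

lemma mult_cong: "op_eq S X X' \<Longrightarrow> op_eq S Y Y' \<Longrightarrow> op_eq S (op_mult S X Y) (op_mult S X' Y')"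
  by (auto simp: op_eq_def op_mult_def intro!: sum.cong)

lemma mult_assoc:
  fixes X :: "('s, 'b::finite) sop"
  assumes "finite S"
  shows "op_eq S (op_mult S (op_mult S X Y) Z) (op_mult S X (op_mult S Y Z))"
  unfolding op_eq_def op_mult_def
  by (auto simp: sum_distrib_left sum_distrib_right mult.assoc intro: sum.swap[THEN trans])

lemma mult_id_left:
  fixes X :: "('s, 'b::finite) sop"
  assumes "finite S"
  shows "op_eq S (op_mult S (op_id S) X) X"
  unfolding op_eq_def op_mult_def op_id_def using assms
proof (intro ballI)
  fix x y :: "'s \<Rightarrow> 'b" assume "x \<in> cfg S" "y \<in> cfg S"
  have "(\<Sum>z\<in>cfg S. (if x = z then 1 else 0) * X z y) = (\<Sum>z\<in>cfg S. if x = z then X z y else 0)"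
    by (rule sum.cong) auto
  then show "(\<Sum>z\<in>cfg S. (if x = z then 1 else 0) * X z y) = X x y"
    using \<open>x \<in> cfg S\<close> assms by (simp add: sum.delta)
qed

lemma mult_id_right:
  fixes X :: "('s, 'b::finite) sop"
  assumes "finite S"
  shows "op_eq S (op_mult S X (op_id S)) X"
  unfolding op_eq_def op_mult_def op_id_def using assms
proof (intro ballI)
  fix x y :: "'s \<Rightarrow> 'b" assume "x \<in> cfg S" "y \<in> cfg S"
  have "(\<Sum>z\<in>cfg S. X x z * (if z = y then 1 else 0)) = (\<Sum>z\<in>cfg S. if z = y then X x z else 0)"
    by (rule sum.cong) auto
  then show "(\<Sum>z\<in>cfg S. X x z * (if z = y then 1 else 0)) = X x y"
    using \<open>y \<in> cfg S\<close> assms by (simp add: sum.delta')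
qed

lemma prod_Nil: "op_prod S [] = op_id S" by (simp add: op_prod_def)
lemma prod_Cons: "op_prod S (x # xs) = op_mult S x (op_prod S xs)" by (simp add: op_prod_def)

lemma prod_append:
  fixes xs :: "('s, 'b::finite) sop list"
  assumes "finite S"
  shows "op_eq S (op_prod S (xs @ ys)) (op_mult S (op_prod S xs) (op_prod S ys))"
proof (induction xs)
  case Nil
  then show ?case using mult_id_left[OF assms, of "op_prod S ys"] by (simp add: prod_Nil op_eq_sym)
next
  case (Cons x xs)
  have "op_eq S (op_prod S ((x # xs) @ ys)) (op_mult S x (op_mult S (op_prod S xs) (op_prod S ys)))"
    using Cons by (simp add: prod_Cons mult_cong)
  also have "op_eq S \<dots> (op_mult S (op_prod S (x # xs)) (op_prod S ys))"
    by (simp add: prod_Cons op_eq_sym mult_assoc assms)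
  finally show ?case .
qed

lemma prod_snoc:
  fixes xs :: "('s, 'b::finite) sop list"
  assumes "finite S"
  shows "op_eq S (op_prod S (xs @ [y])) (op_mult S (op_prod S xs) y)"
proof -
  have "op_eq S (op_prod S (xs @ [y])) (op_mult S (op_prod S xs) (op_prod S [y]))"
    by (rule prod_append[OF assms])
  also have "op_eq S \<dots> (op_mult S (op_prod S xs) y)"
    by (rule mult_cong) (auto simp: prod_Cons prod_Nil mult_id_right assms)
  finally show ?thesis .
qed

lemma prod_cong:
  "(\<And>x. x \<in> set xs \<Longrightarrow> op_eq S (F x) (G x)) \<Longrightarrow> op_eq S (op_prod S (map F xs)) (op_prod S (map G xs))"
  by (induction xs) (auto simp: prod_Cons prod_Nil intro!: mult_cong)

lemma prod_3:
  fixes a :: "('s, 'b::finite) sop"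
  assumes "finite S"
  shows "op_eq S (op_prod S [a, b, c]) (op_mult S a (op_mult S b c))"
  by (auto simp: prod_Cons prod_Nil intro!: mult_cong mult_id_right assms)

lemma embed_embed:
  fixes X :: "('s, 'b) sop"
  assumes "U \<subseteq> T" "T \<subseteq> S"
  shows "embed S T (embed T U X) = embed S U X"
proof (intro ext)
  fix x y :: "'s \<Rightarrow> 'b"
  have r: "\<And>x. restrict (restrict x T) U = restrict x U" using assms by (auto simp: fun_eq_iff)
  have i: "((\<forall>s\<in>T - U. restrict x T s = restrict y T s) \<and> (\<forall>s\<in>S - T. x s = y s))
      \<longleftrightarrow> (\<forall>s\<in>S - U. x s = y s)" using assms by auto
  show "embed S T (embed T U X) x y = embed S U X x y"
    unfolding embed_def r using i by (cases "\<forall>s\<in>S - U. x s = y s") auto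
qed

lemma embed_cong: "op_eq T X Y \<Longrightarrow> op_eq S (embed S T X) (embed S T Y)"
  by (auto simp: op_eq_def embed_def restrict_cfg)

lemma embed_restrict:
  fixes X :: "('s, 'b) sop"
  assumes "U \<subseteq> S'" "S' \<subseteq> S"
  shows "op_eq S' (embed S U X) (embed S' U X)"
  unfolding op_eq_def embed_def
proof (intro ballI)
  fix x y :: "'s \<Rightarrow> 'b" assume x: "x \<in> cfg S'" and y: "y \<in> cfg S'"
  have "(\<forall>s\<in>S - U. x s = y s) \<longleftrightarrow> (\<forall>s\<in>S' - U. x s = y s)"
    using x y assms by (auto simp: cfg_iff) (metis Diff_iff)
  then show "X (restrict x U) (restrict y U) * (if \<forall>s\<in>S - U. x s = y s then 1 else 0) =
         X (restrict x U) (restrict y U) * (if \<forall>s\<in>S' - U. x s = y s then 1 else 0)" by simp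
qed

lemma embed_id:
  assumes "T \<subseteq> S"
  shows "op_eq S (embed S T (op_id T)) (op_id S :: ('s, 'b) sop)"
  unfolding op_eq_def
proof (intro ballI)
  fix x y :: "'s \<Rightarrow> 'b" assume x: "x \<in> cfg S" and y: "y \<in> cfg S"
  have "(restrict x T = restrict y T \<and> (\<forall>s\<in>S - T. x s = y s)) \<longleftrightarrow> x = y"
  proof
    assume h: "restrict x T = restrict y T \<and> (\<forall>s\<in>S - T. x s = y s)"
    show "x = y"
    proof
      fix s
      have "restrict x T s = restrict y T s" using h by simp
      then show "x s = y s"
        using h[THEN conjunct2] x y by (cases "s \<in> S"; cases "s \<in> T") (auto simp: cfg_iff)
    qed
  qed auto
  then show "embed S T (op_id T) x y = op_id S x y"
    unfolding embed_def op_id_def by auto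
qed

lemma sum_cfg_collapse2:
  fixes f :: "('s \<Rightarrow> 'b::finite) \<Rightarrow> 'a::comm_semiring_1"
  assumes "finite S" "T \<subseteq> S" "y \<in> cfg S"
  shows "(\<Sum>w\<in>cfg S. (if \<forall>s\<in>S - T. y s = w s then 1 else 0) * f w) = (\<Sum>z\<in>cfg T. f (mrg T y z))"
proof -
  have "(\<Sum>w\<in>cfg S. (if \<forall>s\<in>S - T. y s = w s then 1 else 0) * f w)
       = (\<Sum>w\<in>cfg S. f w * (if \<forall>s\<in>S - T. w s = y s then 1 else 0))"
  proof (rule sum.cong[OF refl])
    fix w
    have "(\<forall>s\<in>S - T. y s = w s) \<longleftrightarrow> (\<forall>s\<in>S - T. w s = y s)" by auto
    then show "(if \<forall>s\<in>S - T. y s = w s then 1 else 0) * f w = f w * (if \<forall>s\<in>S - T. w s = y s then 1 else 0)"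
      by (simp add: mult.commute)
  qed
  then show ?thesis using sum_cfg_collapse[OF assms] by simp
qed

lemma mrg_out_iff: "(\<forall>s\<in>S - T. mrg T x z s = y s) \<longleftrightarrow> (\<forall>s\<in>S - T. x s = y s)"
  by (auto simp: mrg_def)

lemma embed_mult:
  fixes X :: "('s, 'b::finite) sop"
  assumes "finite S" "T \<subseteq> S"
  shows "op_eq S (op_mult S (embed S T X) (embed S T Y)) (embed S T (op_mult T X Y))"
  unfolding op_eq_def
proof (intro ballI)
  fix x y :: "'s \<Rightarrow> 'b" assume x: "x \<in> cfg S" and y: "y \<in> cfg S"
  have "op_mult S (embed S T X) (embed S T Y) x y
     = (\<Sum>w\<in>cfg S. (if \<forall>s\<in>S - T. x s = w s then 1 else 0) * (X (restrict x T) (restrict w T) * Y (restrict w T) (restrict y T) *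
                     (if \<forall>s\<in>S - T. w s = y s then 1 else 0)))"
    unfolding op_mult_def embed_def by (simp add: mult_ac)
  also have "\<dots> = (\<Sum>z\<in>cfg T. X (restrict x T) (restrict (mrg T x z) T) * Y (restrict (mrg T x z) T) (restrict y T) *
                     (if \<forall>s\<in>S - T. mrg T x z s = y s then 1 else 0))"
    by (rule sum_cfg_collapse2[OF assms x])
  also have "\<dots> = (\<Sum>z\<in>cfg T. X (restrict x T) z * Y z (restrict y T)) * (if \<forall>s\<in>S - T. x s = y s then 1 else 0)"
    unfolding sum_distrib_right mrg_out_iff
    by (rule sum.cong) (simp_all add: restrict_mrg_T)
  also have "\<dots> = embed S T (op_mult T X Y) x y"
    by (simp add: embed_def op_mult_def)
  finally show "op_mult S (embed S T X) (embed S T Y) x y = embed S T (op_mult T X Y) x y" .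
qed

lemma embed_prod:
  fixes xs :: "('s, 'b::finite) sop list"
  assumes "finite S" "T \<subseteq> S"
  shows "op_eq S (embed S T (op_prod T xs)) (op_prod S (map (embed S T) xs))"
proof (induction xs)
  case Nil
  then show ?case by (simp add: prod_Nil embed_id assms)
next
  case (Cons x xs)
  have "op_eq S (embed S T (op_prod T (x # xs))) (op_mult S (embed S T x) (embed S T (op_prod T xs)))"
    by (simp add: prod_Cons op_eq_sym embed_mult assms)
  also have "op_eq S \<dots> (op_prod S (map (embed S T) (x # xs)))"
    using Cons by (simp add: prod_Cons mult_cong)
  finally show ?case .
qed

lemma embed_disj_mult:
  fixes X :: "('s, 'b::finite) sop"
  assumes "finite S" "U1 \<subseteq> S" "U2 \<subseteq> S" "U1 \<inter> U2 = {}" "x \<in> cfg S" "y \<in> cfg S"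
  shows "op_mult S (embed S U1 X) (embed S U2 Y) x y
       = X (restrict x U1) (restrict y U1) * Y (restrict x U2) (restrict y U2) *
         (if \<forall>s\<in>S - (U1 \<union> U2). x s = y s then 1 else 0)"
proof -
  let ?I = "\<lambda>w. if \<forall>s\<in>S - U1. w s = x s then 1 else (0::complex)"
  let ?y1 = "restrict y U1"
  have "op_mult S (embed S U1 X) (embed S U2 Y) x y
     = (\<Sum>w\<in>cfg S. (if \<forall>s\<in>S - U1. x s = w s then 1 else 0) * (X (restrict x U1) (restrict w U1) * Y (restrict w U2) (restrict y U2) *
                     (if \<forall>s\<in>S - U2. w s = y s then 1 else 0)))"
    unfolding op_mult_def embed_def by (simp add: mult_ac)
  also have "\<dots> = (\<Sum>z\<in>cfg U1. X (restrict x U1) (restrict (mrg U1 x z) U1) * Y (restrict (mrg U1 x z) U2) (restrict y U2) *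
                     (if \<forall>s\<in>S - U2. mrg U1 x z s = y s then 1 else 0))"
    by (rule sum_cfg_collapse2[OF assms(1,2,5)])
  also have "\<dots> = (\<Sum>z\<in>cfg U1. if z = ?y1 then X (restrict x U1) z * Y (restrict x U2) (restrict y U2) *
                     (if \<forall>s\<in>S - (U1 \<union> U2). x s = y s then 1 else 0) else 0)"
  proof (rule sum.cong[OF refl])
    fix z :: "'s \<Rightarrow> 'b" assume z: "z \<in> cfg U1"
    have r2: "restrict (mrg U1 x z) U2 = restrict x U2"
      using assms(4) by (auto simp: mrg_def fun_eq_iff)
    have iff: "(\<forall>s\<in>S - U2. mrg U1 x z s = y s) \<longleftrightarrow> z = ?y1 \<and> (\<forall>s\<in>S - (U1 \<union> U2). x s = y s)"
    proof
      assume h: "\<forall>s\<in>S - U2. mrg U1 x z s = y s"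
      show "z = ?y1 \<and> (\<forall>s\<in>S - (U1 \<union> U2). x s = y s)"
      proof
        show "z = ?y1"
        proof
          fix s show "z s = ?y1 s"
          proof (cases "s \<in> U1")
            case True
            then have "s \<in> S - U2" using assms(2,4) by auto
            then have "mrg U1 x z s = y s" using h by blast
            then show ?thesis using True by (simp add: mrg_def)
          next
            case False
            then show ?thesis using z by (simp add: cfg_iff)
          qed
        qed
        show "\<forall>s\<in>S - (U1 \<union> U2). x s = y s"
        proof
          fix s assume s: "s \<in> S - (U1 \<union> U2)"
          then have "mrg U1 x z s = y s" using h by blast
          then show "x s = y s" using s by (simp add: mrg_def)
        qed
      qed
    next
      assume h: "z = ?y1 \<and> (\<forall>s\<in>S - (U1 \<union> U2). x s = y s)"
      show "\<forall>s\<in>S - U2. mrg U1 x z s = y s"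
        using h by (auto simp: mrg_def)
    qed
    show "X (restrict x U1) (restrict (mrg U1 x z) U1) * Y (restrict (mrg U1 x z) U2) (restrict y U2) *
             (if \<forall>s\<in>S - U2. mrg U1 x z s = y s then 1 else 0) =
          (if z = ?y1 then X (restrict x U1) z * Y (restrict x U2) (restrict y U2) *
             (if \<forall>s\<in>S - (U1 \<union> U2). x s = y s then 1 else 0) else 0)"
      using z by (simp only: r2 iff restrict_mrg_T) auto
  qed
  also have "\<dots> = X (restrict x U1) ?y1 * Y (restrict x U2) (restrict y U2) *
                     (if \<forall>s\<in>S - (U1 \<union> U2). x s = y s then 1 else 0)"
    using assms by (subst sum.delta) (auto simp: restrict_cfg finite_subset)
  finally show ?thesis .
qed

lemma embed_commute:
  fixes X :: "('s, 'b::finite) sop"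
  assumes "finite S" "U1 \<subseteq> S" "U2 \<subseteq> S" "U1 \<inter> U2 = {}"
  shows "op_eq S (op_mult S (embed S U1 X) (embed S U2 Y)) (op_mult S (embed S U2 Y) (embed S U1 X))"
  unfolding op_eq_def
proof (intro ballI)
  fix x y :: "'s \<Rightarrow> 'b" assume "x \<in> cfg S" "y \<in> cfg S"
  then show "op_mult S (embed S U1 X) (embed S U2 Y) x y = op_mult S (embed S U2 Y) (embed S U1 X) x y"
    using assms by (simp add: embed_disj_mult Int_commute Un_commute mult.commute)
qed

definition supp :: "'s set \<Rightarrow> 's set \<Rightarrow> ('s, 'b) sop \<Rightarrow> bool" where
  "supp S U P1 \<longleftrightarrow> U \<subseteq> S \<and> (\<exists>P1'. op_eq S P1 (embed S U P1'))"

lemma supp_embed: "U \<subseteq> S \<Longrightarrow> supp S U (embed S U X)"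
  unfolding supp_def by (intro conjI exI[of _ X]) auto

lemma supp_cong:
  assumes "op_eq S P1 P2" "supp S U P1" shows "supp S U P2"
proof -
  obtain P1' where "op_eq S P1 (embed S U P1')" "U \<subseteq> S" using assms(2) by (auto simp: supp_def)
  then have "op_eq S P2 (embed S U P1')" using op_eq_trans[OF op_eq_sym[OF assms(1)]] by blast
  then show ?thesis using \<open>U \<subseteq> S\<close> unfolding supp_def by blast
qed

lemma supp_mono:
  assumes "supp S U P1" "U \<subseteq> U'" "U' \<subseteq> S"
  shows "supp S U' P1"
proof -
  obtain P1' where "op_eq S P1 (embed S U P1')" using assms by (auto simp: supp_def)
  moreover have "embed S U' (embed U' U P1') = embed S U P1'" by (rule embed_embed[OF assms(2,3)])
  ultimately have "op_eq S P1 (embed S U' (embed U' U P1'))" by simp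
  then show ?thesis using assms(3) unfolding supp_def by blast
qed

lemma supp_mult:
  fixes P1 :: "('s, 'b::finite) sop"
  assumes "finite S" "supp S U P1" "supp S U P2"
  shows "supp S U (op_mult S P1 P2)"
proof -
  obtain P1' P2' where a: "op_eq S P1 (embed S U P1')" and b: "op_eq S P2 (embed S U P2')" and "U \<subseteq> S"
    using assms by (auto simp: supp_def)
  have "op_eq S (op_mult S P1 P2) (op_mult S (embed S U P1') (embed S U P2'))" using a b by (rule mult_cong)
  also have "op_eq S \<dots> (embed S U (op_mult U P1' P2'))" by (rule embed_mult[OF assms(1) \<open>U \<subseteq> S\<close>])
  finally show ?thesis using \<open>U \<subseteq> S\<close> unfolding supp_def by blast
qed

lemma supp_id:
  assumes "U \<subseteq> S" shows "supp S U (op_id S :: ('s, 'b::finite) sop)"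
proof -
  have "op_eq S (op_id S) (embed S U (op_id U :: ('s, 'b) sop))" by (rule op_eq_sym[OF embed_id[OF assms]])
  then show ?thesis using assms unfolding supp_def by blast
qed

lemma supp_prod:
  fixes xs :: "('s, 'b::finite) sop list"
  assumes "finite S" "U \<subseteq> S" "\<And>x. x \<in> set xs \<Longrightarrow> supp S U x"
  shows "supp S U (op_prod S xs)"
  using assms(3)
proof (induction xs)
  case Nil then show ?case by (simp add: prod_Nil supp_id assms(2))
next
  case (Cons a xs) then show ?case by (simp add: prod_Cons supp_mult assms(1))
qed

lemma supp_commute:
  fixes P1 :: "('s, 'b::finite) sop"
  assumes "finite S" "supp S U1 P1" "supp S U2 P2" "U1 \<inter> U2 = {}"
  shows "op_eq S (op_mult S P1 P2) (op_mult S P2 P1)"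
proof -
  obtain P1' P2' where b: "op_eq S P1 (embed S U1 P1')" and c: "op_eq S P2 (embed S U2 P2')" and "U1 \<subseteq> S" "U2 \<subseteq> S"
    using assms by (auto simp: supp_def)
  have "op_eq S (op_mult S P1 P2) (op_mult S (embed S U1 P1') (embed S U2 P2'))" using b c by (rule mult_cong)
  also have "op_eq S \<dots> (op_mult S (embed S U2 P2') (embed S U1 P1'))"
    by (rule embed_commute) (use assms \<open>U1 \<subseteq> S\<close> \<open>U2 \<subseteq> S\<close> in auto)
  also have "op_eq S \<dots> (op_mult S P2 P1)" using mult_cong[OF op_eq_sym[OF c] op_eq_sym[OF b]] .
  finally show ?thesis .
qed

definition commutes :: "'s set \<Rightarrow> ('s, 'b::finite) sop \<Rightarrow> ('s, 'b) sop \<Rightarrow> bool" where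
  "commutes S P1 P2 \<longleftrightarrow> op_eq S (op_mult S P1 P2) (op_mult S P2 P1)"

lemma commutes_mult:
  fixes P1 :: "('s, 'b::finite) sop"
  assumes "finite S" "commutes S P1 P2" "commutes S P1 P3"
  shows "commutes S P1 (op_mult S P2 P3)"
proof -
  have "op_eq S (op_mult S P1 (op_mult S P2 P3)) (op_mult S (op_mult S P1 P2) P3)"
    by (rule op_eq_sym, rule mult_assoc[OF assms(1)])
  also have "op_eq S \<dots> (op_mult S (op_mult S P2 P1) P3)"
    using assms(2) unfolding commutes_def by (rule mult_cong) simp
  also have "op_eq S \<dots> (op_mult S P2 (op_mult S P1 P3))" by (rule mult_assoc[OF assms(1)])
  also have "op_eq S \<dots> (op_mult S P2 (op_mult S P3 P1))"
    using assms(3) unfolding commutes_def by (rule mult_cong[OF op_eq_refl])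
  also have "op_eq S \<dots> (op_mult S (op_mult S P2 P3) P1)" by (rule op_eq_sym, rule mult_assoc[OF assms(1)])
  finally show ?thesis by (simp add: commutes_def)
qed

lemma commutes_prod:
  fixes P1 :: "('s, 'b::finite) sop"
  assumes "finite S" "\<And>x. x \<in> set xs \<Longrightarrow> commutes S P1 x"
  shows "commutes S P1 (op_prod S xs)"
  using assms(2)
proof (induction xs)
  case Nil
  have "op_eq S (op_mult S P1 (op_id S)) (op_mult S (op_id S) P1)"
    using op_eq_trans[OF mult_id_right[OF assms(1)] op_eq_sym[OF mult_id_left[OF assms(1)]]] .
  then show ?case unfolding commutes_def prod_Nil .
next
  case (Cons a xs)
  then show ?case by (simp add: prod_Cons commutes_mult assms(1))
qed

lemma supp_commutes:
  fixes P1 :: "('s, 'b::finite) sop"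
  shows "finite S \<Longrightarrow> supp S U1 P1 \<Longrightarrow> supp S U2 P2 \<Longrightarrow> U1 \<inter> U2 = {} \<Longrightarrow> commutes S P1 P2"
  unfolding commutes_def by (rule supp_commute)

lemma ptrace_mrg: "ptrace S T X x y = (\<Sum>z\<in>cfg T. X (mrg T x z) (mrg T y z))"
  by (simp add: ptrace_def mrg_def[abs_def])

lemma mrg_mrg_same: "mrg T (mrg T y z) u = mrg T y u"
  by (simp add: mrg_def fun_eq_iff)

lemma mrg_restrict_disj: "U \<inter> T = {} \<Longrightarrow> restrict (mrg T x z) U = restrict x U"
  by (auto simp: mrg_def fun_eq_iff)

lemma mrg_comm_disj: "U \<inter> T = {} \<Longrightarrow> mrg U (mrg T x z) u = mrg T (mrg U x u) z"
  by (auto simp: mrg_def fun_eq_iff)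

lemma ptrace_cong:
  assumes "T \<subseteq> S" "op_eq S X Y"
  shows "op_eq (S - T) (ptrace S T X) (ptrace S T Y)"
  using assms unfolding op_eq_def ptrace_mrg
  by (auto intro!: sum.cong mrg_cfg2)

lemma ptrace_left_embed:
  fixes P :: "('s, 'b::finite) sop"
  assumes S: "finite S" and T: "T \<subseteq> S" and U: "U \<subseteq> S - T"
  shows "op_eq (S - T) (ptrace S T (op_mult S (embed S U P) X)) (op_mult (S - T) (embed (S - T) U P) (ptrace S T X))"
  unfolding op_eq_def
proof (intro ballI)
  fix x y :: "'s \<Rightarrow> 'b" assume x: "x \<in> cfg (S - T)" and y: "y \<in> cfg (S - T)"
  have disj: "U \<inter> T = {}" using U by auto
  have US: "U \<subseteq> S" using U by auto
  have "ptrace S T (op_mult S (embed S U P) X) x y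
      = (\<Sum>z\<in>cfg T. \<Sum>w\<in>cfg S. (if \<forall>s\<in>S - U. mrg T x z s = w s then 1 else 0) *
            (P (restrict (mrg T x z) U) (restrict w U) * X w (mrg T y z)))"
    unfolding ptrace_mrg op_mult_def embed_def by (simp add: mult_ac)
  also have "\<dots> = (\<Sum>z\<in>cfg T. \<Sum>u\<in>cfg U. P (restrict x U) u * X (mrg T (mrg U x u) z) (mrg T y z))"
  proof (rule sum.cong[OF refl])
    fix z :: "'s \<Rightarrow> 'b" assume z: "z \<in> cfg T"
    have m: "mrg T x z \<in> cfg S" by (rule mrg_cfg2[OF x z T])
    show "(\<Sum>w\<in>cfg S. (if \<forall>s\<in>S - U. mrg T x z s = w s then 1 else 0) *
            (P (restrict (mrg T x z) U) (restrict w U) * X w (mrg T y z)))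
        = (\<Sum>u\<in>cfg U. P (restrict x U) u * X (mrg T (mrg U x u) z) (mrg T y z))"
      by (subst sum_cfg_collapse2[OF S US m])
         (simp add: restrict_mrg_T mrg_restrict_disj[OF disj] mrg_comm_disj[OF disj] cong: sum.cong)
  qed
  also have "\<dots> = (\<Sum>u\<in>cfg U. P (restrict x U) u * (\<Sum>z\<in>cfg T. X (mrg T (mrg U x u) z) (mrg T y z)))"
    by (subst sum.swap) (simp add: sum_distrib_left)
  also have "\<dots> = (\<Sum>w\<in>cfg (S - T). (if \<forall>s\<in>(S - T) - U. x s = w s then 1 else 0) *
            (P (restrict x U) (restrict w U) * ptrace S T X w y))"
    by (subst sum_cfg_collapse2[OF _ U x]) (use S in \<open>simp_all add: restrict_mrg_T ptrace_mrg cong: sum.cong\<close>)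
  also have "\<dots> = op_mult (S - T) (embed (S - T) U P) (ptrace S T X) x y"
    unfolding op_mult_def embed_def by (simp add: mult_ac)
  finally show "ptrace S T (op_mult S (embed S U P) X) x y = op_mult (S - T) (embed (S - T) U P) (ptrace S T X) x y" .
qed

lemma ptrace_right_embed:
  fixes P :: "('s, 'b::finite) sop"
  assumes S: "finite S" and T: "T \<subseteq> S" and U: "U \<subseteq> S - T"
  shows "op_eq (S - T) (ptrace S T (op_mult S X (embed S U P))) (op_mult (S - T) (ptrace S T X) (embed (S - T) U P))"
  unfolding op_eq_def
proof (intro ballI)
  fix x y :: "'s \<Rightarrow> 'b" assume x: "x \<in> cfg (S - T)" and y: "y \<in> cfg (S - T)"
  have disj: "U \<inter> T = {}" using U by auto
  have US: "U \<subseteq> S" using U by auto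
  have "ptrace S T (op_mult S X (embed S U P)) x y
      = (\<Sum>z\<in>cfg T. \<Sum>w\<in>cfg S. (X (mrg T x z) w * P (restrict w U) (restrict (mrg T y z) U)) *
           (if \<forall>s\<in>S - U. w s = mrg T y z s then 1 else 0))"
    unfolding ptrace_mrg op_mult_def embed_def by (simp add: mult_ac)
  also have "\<dots> = (\<Sum>z\<in>cfg T. \<Sum>u\<in>cfg U. X (mrg T x z) (mrg T (mrg U y u) z) * P u (restrict y U))"
  proof (rule sum.cong[OF refl])
    fix z :: "'s \<Rightarrow> 'b" assume z: "z \<in> cfg T"
    have m: "mrg T y z \<in> cfg S" by (rule mrg_cfg2[OF y z T])
    show "(\<Sum>w\<in>cfg S. (X (mrg T x z) w * P (restrict w U) (restrict (mrg T y z) U)) *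
           (if \<forall>s\<in>S - U. w s = mrg T y z s then 1 else 0))
        = (\<Sum>u\<in>cfg U. X (mrg T x z) (mrg T (mrg U y u) z) * P u (restrict y U))"
      by (subst sum_cfg_collapse[OF S US m])
         (simp add: restrict_mrg_T mrg_restrict_disj[OF disj] mrg_comm_disj[OF disj] cong: sum.cong)
  qed
  also have "\<dots> = (\<Sum>u\<in>cfg U. (\<Sum>z\<in>cfg T. X (mrg T x z) (mrg T (mrg U y u) z)) * P u (restrict y U))"
    by (subst sum.swap) (simp add: sum_distrib_right)
  also have "\<dots> = (\<Sum>w\<in>cfg (S - T). (ptrace S T X x w * P (restrict w U) (restrict y U)) *
           (if \<forall>s\<in>(S - T) - U. w s = y s then 1 else 0))"
    by (subst sum_cfg_collapse[OF _ U y]) (use S in \<open>simp_all add: restrict_mrg_T ptrace_mrg cong: sum.cong\<close>)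
  also have "\<dots> = op_mult (S - T) (ptrace S T X) (embed (S - T) U P) x y"
    unfolding op_mult_def embed_def by (simp add: mult_ac)
  finally show "ptrace S T (op_mult S X (embed S U P)) x y = op_mult (S - T) (ptrace S T X) (embed (S - T) U P) x y" .
qed

lemma ptrace_union:
  fixes X :: "('s, 'b::finite) sop"
  assumes S: "finite S" and T: "T1 \<union> T2 \<subseteq> S" and d: "T1 \<inter> T2 = {}"
  shows "op_eq (S - (T1 \<union> T2)) (ptrace S (T1 \<union> T2) X) (ptrace (S - T1) T2 (ptrace S T1 X))"
  unfolding op_eq_def
proof (intro ballI)
  fix x y :: "'s \<Rightarrow> 'b"
  have fin: "finite (T1 \<union> T2)" using S T finite_subset by blast
  have e: "(T1 \<union> T2) - T1 = T2" using d by auto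
  have m: "\<And>x z2 z1. mrg (T1 \<union> T2) x (mrg T1 z2 z1) = mrg T1 (mrg T2 x z2) z1"
    by (auto simp: mrg_def fun_eq_iff)
  show "ptrace S (T1 \<union> T2) X x y = ptrace (S - T1) T2 (ptrace S T1 X) x y"
    unfolding ptrace_mrg
    by (subst sum_cfg_split[OF fin, of T1]) (simp_all add: e m)
qed

lemma ptrace_embed:
  fixes P :: "('s, 'b::finite) sop"
  assumes "T \<subseteq> U" "U \<subseteq> S"
  shows "op_eq (S - T) (ptrace S T (embed S U P)) (embed (S - T) (U - T) (ptrace U T P))"
  unfolding op_eq_def
proof (intro ballI)
  fix x y :: "'s \<Rightarrow> 'b" assume x: "x \<in> cfg (S - T)" and y: "y \<in> cfg (S - T)"
  have r: "\<And>x z. restrict (mrg T x z) U = mrg T (restrict x (U - T)) z"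
    using assms by (auto simp: mrg_def fun_eq_iff)
  have i: "(\<forall>s\<in>S - U. mrg T x z s = mrg T y z s) \<longleftrightarrow> (\<forall>s\<in>S - T - (U - T). x s = y s)" for z
    using assms by (auto simp: mrg_def)
  show "ptrace S T (embed S U P) x y = embed (S - T) (U - T) (ptrace U T P) x y"
    unfolding ptrace_mrg embed_def r i by (simp add: sum_distrib_right)
qed

lemma ptrace_cyclic:
  fixes X :: "('s, 'b::finite) sop"
  assumes S: "finite S" and T: "T \<subseteq> S"
  shows "op_eq (S - T) (ptrace S T (op_mult S X (embed S T H))) (ptrace S T (op_mult S (embed S T H) X))"
  unfolding op_eq_def
proof (intro ballI)
  fix x y :: "'s \<Rightarrow> 'b" assume x: "x \<in> cfg (S - T)" and y: "y \<in> cfg (S - T)"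
  have "ptrace S T (op_mult S X (embed S T H)) x y
      = (\<Sum>z\<in>cfg T. \<Sum>w\<in>cfg S. (X (mrg T x z) w * H (restrict w T) (restrict (mrg T y z) T)) *
           (if \<forall>s\<in>S - T. w s = mrg T y z s then 1 else 0))"
    unfolding ptrace_mrg op_mult_def embed_def by (simp add: mult_ac)
  also have "\<dots> = (\<Sum>z\<in>cfg T. \<Sum>u\<in>cfg T. X (mrg T x z) (mrg T y u) * H u z)"
  proof (rule sum.cong[OF refl])
    fix z :: "'s \<Rightarrow> 'b" assume z: "z \<in> cfg T"
    have m: "mrg T y z \<in> cfg S" by (rule mrg_cfg2[OF y z T])
    show "(\<Sum>w\<in>cfg S. (X (mrg T x z) w * H (restrict w T) (restrict (mrg T y z) T)) *
           (if \<forall>s\<in>S - T. w s = mrg T y z s then 1 else 0))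
        = (\<Sum>u\<in>cfg T. X (mrg T x z) (mrg T y u) * H u z)"
      by (subst sum_cfg_collapse[OF S T m]) (simp add: restrict_mrg_T z mrg_mrg_same cong: sum.cong)
  qed
  also have "\<dots> = (\<Sum>z\<in>cfg T. \<Sum>u\<in>cfg T. H z u * X (mrg T x u) (mrg T y z))"
    by (subst sum.swap) (simp add: mult.commute)
  also have "\<dots> = (\<Sum>z\<in>cfg T. \<Sum>w\<in>cfg S. (if \<forall>s\<in>S - T. mrg T x z s = w s then 1 else 0) *
           (H (restrict (mrg T x z) T) (restrict w T) * X w (mrg T y z)))"
  proof (rule sum.cong[OF refl])
    fix z :: "'s \<Rightarrow> 'b" assume z: "z \<in> cfg T"
    have m: "mrg T x z \<in> cfg S" by (rule mrg_cfg2[OF x z T])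
    show "(\<Sum>u\<in>cfg T. H z u * X (mrg T x u) (mrg T y z)) = (\<Sum>w\<in>cfg S. (if \<forall>s\<in>S - T. mrg T x z s = w s then 1 else 0) *
           (H (restrict (mrg T x z) T) (restrict w T) * X w (mrg T y z)))"
      by (subst sum_cfg_collapse2[OF S T m]) (simp add: restrict_mrg_T z mrg_mrg_same cong: sum.cong)
  qed
  also have "\<dots> = ptrace S T (op_mult S (embed S T H) X) x y"
    unfolding ptrace_mrg op_mult_def embed_def by (simp add: mult_ac)
  finally show "ptrace S T (op_mult S X (embed S T H)) x y = ptrace S T (op_mult S (embed S T H) X) x y" .
qed

lemma embed_restrict':
  fixes X :: "('s, 'b) sop"
  assumes "U \<subseteq> S'" "S' \<subseteq> S"
  shows "op_eq S' (embed S' U X) (embed S U X)"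
  by (rule op_eq_sym[OF embed_restrict[OF assms]])

lemma supp_restrict:
  assumes "supp S U P" "U \<subseteq> S'" "S' \<subseteq> S"
  shows "supp S' U P"
proof -
  obtain P' where "op_eq S P (embed S U P')" using assms by (auto simp: supp_def)
  then have "op_eq S' P (embed S U P')" using op_eq_subset assms by blast
  then have "op_eq S' P (embed S' U P')" using op_eq_trans embed_restrict[OF assms(2,3)] by blast
  then show ?thesis using assms(2) unfolding supp_def by blast
qed

lemma ptrace_left:
  fixes P :: "('s, 'b::finite) sop"
  assumes S: "finite S" and T: "T \<subseteq> S" and P: "supp S U P" and d: "U \<inter> T = {}"
  shows "op_eq (S - T) (ptrace S T (op_mult S P X)) (op_mult (S - T) P (ptrace S T X))"
proof -
  obtain P' where e: "op_eq S P (embed S U P')" and US: "U \<subseteq> S" using P by (auto simp: supp_def)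
  have U: "U \<subseteq> S - T" using US d by auto
  have "op_eq (S - T) (ptrace S T (op_mult S P X)) (ptrace S T (op_mult S (embed S U P') X))"
    by (rule ptrace_cong[OF T mult_cong[OF e op_eq_refl]])
  also have "op_eq (S - T) \<dots> (op_mult (S - T) (embed (S - T) U P') (ptrace S T X))"
    by (rule ptrace_left_embed[OF S T U])
  also have "op_eq (S - T) \<dots> (op_mult (S - T) P (ptrace S T X))"
  proof (rule mult_cong[OF _ op_eq_refl])
    have "op_eq (S - T) (embed (S - T) U P') (embed S U P')" by (rule embed_restrict'[OF U]) auto
    moreover have "op_eq (S - T) (embed S U P') P" using op_eq_subset[OF op_eq_sym[OF e]] by blast
    ultimately show "op_eq (S - T) (embed (S - T) U P') P" by (rule op_eq_trans)
  qed
  finally show ?thesis .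
qed

lemma ptrace_right:
  fixes P :: "('s, 'b::finite) sop"
  assumes S: "finite S" and T: "T \<subseteq> S" and P: "supp S U P" and d: "U \<inter> T = {}"
  shows "op_eq (S - T) (ptrace S T (op_mult S X P)) (op_mult (S - T) (ptrace S T X) P)"
proof -
  obtain P' where e: "op_eq S P (embed S U P')" and US: "U \<subseteq> S" using P by (auto simp: supp_def)
  have U: "U \<subseteq> S - T" using US d by auto
  have "op_eq (S - T) (ptrace S T (op_mult S X P)) (ptrace S T (op_mult S X (embed S U P')))"
    by (rule ptrace_cong[OF T mult_cong[OF op_eq_refl e]])
  also have "op_eq (S - T) \<dots> (op_mult (S - T) (ptrace S T X) (embed (S - T) U P'))"
    by (rule ptrace_right_embed[OF S T U])
  also have "op_eq (S - T) \<dots> (op_mult (S - T) (ptrace S T X) P)"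
  proof (rule mult_cong[OF op_eq_refl])
    have "op_eq (S - T) (embed (S - T) U P') (embed S U P')" by (rule embed_restrict'[OF U]) auto
    moreover have "op_eq (S - T) (embed S U P') P" using op_eq_subset[OF op_eq_sym[OF e]] by blast
    ultimately show "op_eq (S - T) (embed (S - T) U P') P" by (rule op_eq_trans)
  qed
  finally show ?thesis .
qed

lemma ptrace_supp:
  fixes P :: "('s, 'b::finite) sop"
  assumes P: "supp S U P" and T: "T \<subseteq> U"
  shows "supp (S - T) (U - T) (ptrace S T P)"
proof -
  obtain P' where e: "op_eq S P (embed S U P')" and US: "U \<subseteq> S" using P by (auto simp: supp_def)
  have "op_eq (S - T) (ptrace S T P) (ptrace S T (embed S U P'))"
    by (rule ptrace_cong[OF _ e]) (use T US in auto)
  also have "op_eq (S - T) \<dots> (embed (S - T) (U - T) (ptrace U T P'))" by (rule ptrace_embed[OF T US])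
  finally show ?thesis using US unfolding supp_def by blast
qed

lemma ptrace_embed_eq:
  fixes P :: "('s, 'b::finite) sop"
  assumes P: "op_eq S Q (embed S U P)" and T: "T \<subseteq> U" "U \<subseteq> S"
  shows "op_eq (S - T) (ptrace S T Q) (embed (S - T) (U - T) (ptrace U T P))"
proof -
  have "op_eq (S - T) (ptrace S T Q) (ptrace S T (embed S U P))"
    by (rule ptrace_cong[OF _ P]) (use T in auto)
  also have "op_eq (S - T) \<dots> (embed (S - T) (U - T) (ptrace U T P))" by (rule ptrace_embed[OF T])
  finally show ?thesis .
qed

lemma ptrace_cyclic_supp:
  fixes H :: "('s, 'b::finite) sop"
  assumes S: "finite S" and H: "supp S T H"
  shows "op_eq (S - T) (ptrace S T (op_mult S X H)) (ptrace S T (op_mult S H X))"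
proof -
  obtain H' where e: "op_eq S H (embed S T H')" and T: "T \<subseteq> S" using H by (auto simp: supp_def)
  have "op_eq (S - T) (ptrace S T (op_mult S X H)) (ptrace S T (op_mult S X (embed S T H')))"
    by (rule ptrace_cong[OF T mult_cong[OF op_eq_refl e]])
  also have "op_eq (S - T) \<dots> (ptrace S T (op_mult S (embed S T H') X))" by (rule ptrace_cyclic[OF S T])
  also have "op_eq (S - T) \<dots> (ptrace S T (op_mult S H X))"
    by (rule ptrace_cong[OF T mult_cong[OF op_eq_sym[OF e] op_eq_refl]])
  finally show ?thesis .
qed

lemma ptrace_conj:
  fixes G :: "('s, 'b::finite) sop"
  assumes S: "finite S" and G: "supp S T G" and Gi: "supp S T Gi"
    and inv1: "op_eq S (op_mult S G Gi) (op_id S)" and inv2: "op_eq S (op_mult S Gi G) (op_id S)"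
    and XY: "op_eq S (op_mult S X G) (op_mult S G Y)"
  shows "op_eq (S - T) (ptrace S T X) (ptrace S T Y)"
proof -
  have T: "T \<subseteq> S" using G by (auto simp: supp_def)
  have "op_eq S X (op_mult S X (op_mult S G Gi))"
    using op_eq_sym[OF op_eq_trans[OF mult_cong[OF op_eq_refl inv1] mult_id_right[OF S]]] .
  also have "op_eq S \<dots> (op_mult S (op_mult S X G) Gi)" by (rule op_eq_sym[OF mult_assoc[OF S]])
  also have "op_eq S \<dots> (op_mult S (op_mult S G Y) Gi)" by (rule mult_cong[OF XY op_eq_refl])
  finally have a: "op_eq S X (op_mult S (op_mult S G Y) Gi)" .
  have "op_eq (S - T) (ptrace S T X) (ptrace S T (op_mult S (op_mult S G Y) Gi))"
    by (rule ptrace_cong[OF T a])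
  also have "op_eq (S - T) \<dots> (ptrace S T (op_mult S Gi (op_mult S G Y)))"
    by (rule ptrace_cyclic_supp[OF S Gi])
  also have "op_eq (S - T) \<dots> (ptrace S T Y)"
  proof (rule ptrace_cong[OF T])
    have "op_eq S (op_mult S Gi (op_mult S G Y)) (op_mult S (op_mult S Gi G) Y)"
      by (rule op_eq_sym[OF mult_assoc[OF S]])
    also have "op_eq S \<dots> (op_mult S (op_id S) Y)" by (rule mult_cong[OF inv2 op_eq_refl])
    also have "op_eq S \<dots> Y" by (rule mult_id_left[OF S])
    finally show "op_eq S (op_mult S Gi (op_mult S G Y)) Y" .
  qed
  finally show ?thesis .
qed

lemma invertible_embed:
  fixes X :: "('s, 'b::finite) sop"
  assumes S: "finite S" and T: "T \<subseteq> S" and inv: "op_invertible T X"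
  shows "\<exists>Gi. supp S T Gi \<and> op_eq S (op_mult S (embed S T X) Gi) (op_id S) \<and> op_eq S (op_mult S Gi (embed S T X)) (op_id S)"
proof -
  obtain Y where y1: "op_eq T (op_mult T X Y) (op_id T)" and y2: "op_eq T (op_mult T Y X) (op_id T)"
    using inv by (auto simp: op_invertible_def)
  have "op_eq S (op_mult S (embed S T X) (embed S T Y)) (op_id S)"
    using op_eq_trans[OF embed_mult[OF S T] op_eq_trans[OF embed_cong[OF y1] embed_id[OF T]]] .
  moreover have "op_eq S (op_mult S (embed S T Y) (embed S T X)) (op_id S)"
    using op_eq_trans[OF embed_mult[OF S T] op_eq_trans[OF embed_cong[OF y2] embed_id[OF T]]] .
  ultimately show ?thesis using supp_embed[OF T] by blast
qed

definition ren :: "('s \<Rightarrow> 's) \<Rightarrow> 's set \<Rightarrow> ('s, 'b) sop \<Rightarrow> ('s, 'b) sop" where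
  "ren f T P = (\<lambda>x y. P (restrict (x \<circ> f) T) (restrict (y \<circ> f) T))"

lemma ren_cong: "op_eq T P Q \<Longrightarrow> op_eq (f ` T) (ren f T P) (ren f T Q)"
  by (auto simp: op_eq_def ren_def restrict_cfg)

lemma ren_bij:
  assumes "inj_on f T"
  shows "bij_betw (\<lambda>w. restrict (w \<circ> f) T) (cfg (f ` T)) (cfg T)"
proof (rule bij_betw_byWitness[where f' = "\<lambda>z. restrict (z \<circ> the_inv_into T f) (f ` T)"])
  show "\<forall>a\<in>cfg (f ` T). restrict (restrict (a \<circ> f) T \<circ> the_inv_into T f) (f ` T) = a"
    using assms by (auto simp: cfg_iff fun_eq_iff the_inv_into_f_f f_the_inv_into_f the_inv_into_into)
  show "\<forall>a'\<in>cfg T. restrict (restrict (a' \<circ> the_inv_into T f) (f ` T) \<circ> f) T = a'"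
    using assms by (auto simp: cfg_iff fun_eq_iff the_inv_into_f_f)
  show "(\<lambda>w. restrict (w \<circ> f) T) ` cfg (f ` T) \<subseteq> cfg T" by (auto simp: restrict_cfg)
  show "(\<lambda>z. restrict (z \<circ> the_inv_into T f) (f ` T)) ` cfg T \<subseteq> cfg (f ` T)" by (auto simp: restrict_cfg)
qed

lemma ren_mult:
  fixes P :: "('s, 'b::finite) sop"
  assumes "inj_on f T"
  shows "op_eq (f ` T) (ren f T (op_mult T P Q)) (op_mult (f ` T) (ren f T P) (ren f T Q))"
  unfolding op_eq_def
proof (intro ballI)
  fix x y :: "'s \<Rightarrow> 'b"
  have "(\<Sum>w\<in>cfg (f ` T). P (restrict (x \<circ> f) T) (restrict (w \<circ> f) T) * Q (restrict (w \<circ> f) T) (restrict (y \<circ> f) T))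
      = (\<Sum>z\<in>cfg T. P (restrict (x \<circ> f) T) z * Q z (restrict (y \<circ> f) T))"
    using sum.reindex_bij_betw[OF ren_bij[OF assms], of "\<lambda>z. P (restrict (x \<circ> f) T) z * Q z (restrict (y \<circ> f) T)"] .
  then show "ren f T (op_mult T P Q) x y = op_mult (f ` T) (ren f T P) (ren f T Q) x y"
    by (simp add: ren_def op_mult_def)
qed

lemma ren_id:
  assumes "inj_on f T"
  shows "op_eq (f ` T) (ren f T (op_id T)) (op_id (f ` T) :: ('s, 'b) sop)"
  unfolding op_eq_def
proof (intro ballI)
  fix x y :: "'s \<Rightarrow> 'b" assume x: "x \<in> cfg (f ` T)" and y: "y \<in> cfg (f ` T)"
  have "restrict (x \<circ> f) T = restrict (y \<circ> f) T \<longleftrightarrow> x = y"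
    using bij_betw_imp_inj_on[OF ren_bij[OF assms]] x y unfolding inj_on_def by auto
  then show "ren f T (op_id T) x y = op_id (f ` T) x y" by (simp add: ren_def op_id_def)
qed

lemma ren_prod:
  fixes xs :: "('s, 'b::finite) sop list"
  assumes "inj_on f T"
  shows "op_eq (f ` T) (ren f T (op_prod T xs)) (op_prod (f ` T) (map (ren f T) xs))"
proof (induction xs)
  case Nil
  then show ?case by (simp add: prod_Nil ren_id assms)
next
  case (Cons a xs)
  have "op_eq (f ` T) (ren f T (op_prod T (a # xs))) (op_mult (f ` T) (ren f T a) (ren f T (op_prod T xs)))"
    unfolding prod_Cons by (rule ren_mult[OF assms])
  also have "op_eq (f ` T) \<dots> (op_prod (f ` T) (map (ren f T) (a # xs)))"
    unfolding list.map prod_Cons by (rule mult_cong[OF op_eq_refl Cons])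
  finally show ?case .
qed

lemma ren_embed:
  fixes X :: "('s, 'b) sop"
  assumes "inj_on f S" "U \<subseteq> S"
  shows "ren f S (embed S U X) = embed (f ` S) (f ` U) (ren f U X)"
proof (intro ext)
  fix x y :: "'s \<Rightarrow> 'b"
  have r: "restrict (restrict (x \<circ> f) S) U = restrict (restrict x (f ` U) \<circ> f) U" for x :: "'s \<Rightarrow> 'b"
    using assms by (auto simp: fun_eq_iff)
  have i: "(\<forall>s\<in>S - U. restrict (x \<circ> f) S s = restrict (y \<circ> f) S s) \<longleftrightarrow> (\<forall>t\<in>f ` S - f ` U. x t = y t)"
  proof -
    have "f ` S - f ` U = f ` (S - U)" using assms inj_on_image_set_diff by blast
    then show ?thesis by auto
  qed
  show "ren f S (embed S U X) x y = embed (f ` S) (f ` U) (ren f U X) x y"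
    unfolding ren_def embed_def r i ..
qed

lemma ren_op3:
  assumes "s1 \<in> T" "s2 \<in> T" "s3 \<in> T"
  shows "ren f T (op3_on (s1, s2, s3) X) = op3_on (f s1, f s2, f s3) X"
  using assms by (simp add: ren_def op3_on_def)

lemma ren_ptrace:
  fixes X :: "('s, 'b::finite) sop"
  assumes inj: "inj_on f S" and T: "T \<subseteq> S"
  shows "op_eq (f ` S - f ` T) (ren f (S - T) (ptrace S T X)) (ptrace (f ` S) (f ` T) (ren f S X))"
  unfolding op_eq_def
proof (intro ballI)
  fix x y :: "'s \<Rightarrow> 'b"
  have injT: "inj_on f T" using inj T inj_on_subset by blast
  have m: "restrict (mrg (f ` T) x w \<circ> f) S = mrg T (restrict (x \<circ> f) (S - T)) (restrict (w \<circ> f) T)" for x w :: "'s \<Rightarrow> 'b"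
  proof
    fix s
    have "s \<in> S \<Longrightarrow> f s \<in> f ` T \<longleftrightarrow> s \<in> T" using inj T by (auto simp: inj_on_def)
    then show "restrict (mrg (f ` T) x w \<circ> f) S s = mrg T (restrict (x \<circ> f) (S - T)) (restrict (w \<circ> f) T) s"
      using T by (auto simp: mrg_def)
  qed
  have "(\<Sum>w\<in>cfg (f ` T). X (restrict (mrg (f ` T) x w \<circ> f) S) (restrict (mrg (f ` T) y w \<circ> f) S))
      = (\<Sum>z\<in>cfg T. X (mrg T (restrict (x \<circ> f) (S - T)) z) (mrg T (restrict (y \<circ> f) (S - T)) z))"
    unfolding m
    using sum.reindex_bij_betw[OF ren_bij[OF injT], of "\<lambda>z. X (mrg T (restrict (x \<circ> f) (S - T)) z) (mrg T (restrict (y \<circ> f) (S - T)) z)"] .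
  then show "ren f (S - T) (ptrace S T X) x y = ptrace (f ` S) (f ` T) (ren f S X) x y"
    by (simp add: ren_def ptrace_mrg)
qed

lemma ren_fix:
  fixes P :: "('s, 'b) sop"
  assumes "\<And>s. s \<in> W \<Longrightarrow> f s = s"
  shows "op_eq W (ren f W P) P"
  unfolding op_eq_def
proof (intro ballI)
  fix x y :: "'s \<Rightarrow> 'b" assume "x \<in> cfg W" "y \<in> cfg W"
  then have "restrict (x \<circ> f) W = x" "restrict (y \<circ> f) W = y"
    using assms by (auto simp: cfg_iff fun_eq_iff)
  then show "ren f W P x y = P x y" by (simp add: ren_def)
qed

definition pmap :: "(plane \<Rightarrow> plane) \<Rightarrow> slot \<Rightarrow> slot" where
  "pmap g = (\<lambda>(p, q). (g p, g q))"

lemma ren_loc: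
  assumes inj: "inj_on (pmap g) S" and sub: "{(a, b), (a, c), (b, c)} \<subseteq> S"
  shows "ren (pmap g) S (loc S X \<sigma> a b c ra rb rc) = loc (pmap g ` S) X \<sigma> (g a) (g b) (g c) ra rb rc"
proof -
  have "ren (pmap g) S (embed S {(a, b), (a, c), (b, c)} (op3_on ((a, b), (a, c), (b, c)) (X \<sigma> ra rb rc)))
     = embed (pmap g ` S) (pmap g ` {(a, b), (a, c), (b, c)}) (ren (pmap g) {(a, b), (a, c), (b, c)} (op3_on ((a, b), (a, c), (b, c)) (X \<sigma> ra rb rc)))"
    by (rule ren_embed[OF inj sub])
  also have "ren (pmap g) {(a, b), (a, c), (b, c)} (op3_on ((a, b), (a, c), (b, c)) (X \<sigma> ra rb rc))
      = op3_on (pmap g (a, b), pmap g (a, c), pmap g (b, c)) (X \<sigma> ra rb rc)"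
    by (rule ren_op3) auto
  finally show ?thesis unfolding loc_def by (simp add: pmap_def)
qed

lemma commutes_sym: "commutes S P Q \<Longrightarrow> commutes S Q P"
  by (simp add: commutes_def op_eq_sym)

lemma prod_upt_Suc:
  fixes X :: "nat \<Rightarrow> ('s, 'b::finite) sop"
  assumes "finite S"
  shows "op_eq S (op_prod S (map X [0..<Suc n])) (op_mult S (op_prod S (map X [0..<n])) (X n))"
  using prod_snoc[OF assms, of "map X [0..<n]" "X n"] by simp

lemma telescope:
  fixes X :: "nat \<Rightarrow> ('s, 'b::finite) sop"
  assumes S: "finite S" and h: "\<And>i. i < n \<Longrightarrow> op_eq S (op_mult S (X i) (G (Suc i))) (op_mult S (G i) (Y i))"
  shows "op_eq S (op_mult S (op_prod S (map X [0..<n])) (G n)) (op_mult S (G 0) (op_prod S (map Y [0..<n])))"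
  using h
proof (induction n)
  case 0
  show ?case using op_eq_trans[OF mult_id_left[OF S] op_eq_sym[OF mult_id_right[OF S]]] by (simp add: prod_Nil)
next
  case (Suc n)
  let ?P = "op_prod S (map X [0..<n])" and ?Q = "op_prod S (map Y [0..<n])"
  have IH: "op_eq S (op_mult S ?P (G n)) (op_mult S (G 0) ?Q)" using Suc by simp
  have "op_eq S (op_mult S (op_prod S (map X [0..<Suc n])) (G (Suc n))) (op_mult S (op_mult S ?P (X n)) (G (Suc n)))"
    by (rule mult_cong[OF prod_upt_Suc[OF S] op_eq_refl])
  also have "op_eq S \<dots> (op_mult S ?P (op_mult S (X n) (G (Suc n))))" by (rule mult_assoc[OF S])
  also have "op_eq S \<dots> (op_mult S ?P (op_mult S (G n) (Y n)))" by (rule mult_cong[OF op_eq_refl Suc.prems]) simp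
  also have "op_eq S \<dots> (op_mult S (op_mult S ?P (G n)) (Y n))" by (rule op_eq_sym[OF mult_assoc[OF S]])
  also have "op_eq S \<dots> (op_mult S (op_mult S (G 0) ?Q) (Y n))" by (rule mult_cong[OF IH op_eq_refl])
  also have "op_eq S \<dots> (op_mult S (G 0) (op_mult S ?Q (Y n)))" by (rule mult_assoc[OF S])
  also have "op_eq S \<dots> (op_mult S (G 0) (op_prod S (map Y [0..<Suc n])))"
    by (rule mult_cong[OF op_eq_refl op_eq_sym[OF prod_upt_Suc[OF S]]])
  finally show ?case .
qed

lemma reorder:
  fixes P :: "nat \<Rightarrow> ('s, 'b::finite) sop"
  assumes S: "finite S" and h: "\<And>i j. i < j \<Longrightarrow> j < n \<Longrightarrow> commutes S (Q i) (P j)"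
  shows "op_eq S (op_prod S (map (\<lambda>i. op_mult S (P i) (Q i)) [0..<n]))
                 (op_mult S (op_prod S (map P [0..<n])) (op_prod S (map Q [0..<n])))"
  using h
proof (induction n)
  case 0
  show ?case using op_eq_sym[OF mult_id_left[OF S]] by (simp add: prod_Nil)
next
  case (Suc n)
  let ?PQ = "op_prod S (map (\<lambda>i. op_mult S (P i) (Q i)) [0..<n])"
  let ?P = "op_prod S (map P [0..<n])" and ?Q = "op_prod S (map Q [0..<n])"
  have IH: "op_eq S ?PQ (op_mult S ?P ?Q)" using Suc by simp
  have c: "commutes S (P n) ?Q"
    by (rule commutes_prod[OF S]) (use Suc.prems in \<open>auto intro: commutes_sym\<close>)
  have "op_eq S (op_prod S (map (\<lambda>i. op_mult S (P i) (Q i)) [0..<Suc n])) (op_mult S ?PQ (op_mult S (P n) (Q n)))"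
    by (rule prod_upt_Suc[OF S])
  also have "op_eq S \<dots> (op_mult S (op_mult S ?P ?Q) (op_mult S (P n) (Q n)))" by (rule mult_cong[OF IH op_eq_refl])
  also have "op_eq S \<dots> (op_mult S ?P (op_mult S ?Q (op_mult S (P n) (Q n))))" by (rule mult_assoc[OF S])
  also have "op_eq S \<dots> (op_mult S ?P (op_mult S (op_mult S ?Q (P n)) (Q n)))"
    by (rule mult_cong[OF op_eq_refl op_eq_sym[OF mult_assoc[OF S]]])
  also have "op_eq S \<dots> (op_mult S ?P (op_mult S (op_mult S (P n) ?Q) (Q n)))"
    using c unfolding commutes_def by (intro mult_cong[OF op_eq_refl] mult_cong[OF _ op_eq_refl]) (rule op_eq_sym)
  also have "op_eq S \<dots> (op_mult S ?P (op_mult S (P n) (op_mult S ?Q (Q n))))"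
    by (rule mult_cong[OF op_eq_refl mult_assoc[OF S]])
  also have "op_eq S \<dots> (op_mult S (op_mult S ?P (P n)) (op_mult S ?Q (Q n)))" by (rule op_eq_sym[OF mult_assoc[OF S]])
  also have "op_eq S \<dots> (op_mult S (op_prod S (map P [0..<Suc n])) (op_prod S (map Q [0..<Suc n])))"
    by (rule mult_cong; rule op_eq_sym[OF prod_upt_Suc[OF S]])
  finally show ?case .
qed

lemma bit_of_nat_even: "(of_nat (2 * k) :: bit) = 0"
  by simp

lemma bit_shift: "(\<tau> :: bit) + of_nat l = (\<tau> + 1) + of_nat (l + 1)"
proof -
  have "(\<tau> + 1) + of_nat (l + 1) = \<tau> + of_nat l + (1 + 1 :: bit)"
    by (simp only: of_nat_add of_nat_1 add.assoc add.commute add.left_commute)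
  also have "(1 + 1 :: bit) = 0" by (metis bit_2_eq_0 one_add_one)
  finally show ?thesis by (simp only: add_0_right)
qed

lemma S6_eq: "S6 = {(E 1, E 2), (E 1, E 3), (E 1, E 4), (E 2, E 3), (E 2, E 4), (E 3, E 4)}"
proof -
  have "\<And>i j::nat. 1 \<le> i \<Longrightarrow> i < j \<Longrightarrow> j \<le> 4 \<Longrightarrow>
     (i = 1 \<and> j = 2) \<or> (i = 1 \<and> j = 3) \<or> (i = 1 \<and> j = 4) \<or> (i = 2 \<and> j = 3) \<or> (i = 2 \<and> j = 4) \<or> (i = 3 \<and> j = 4)"
    by presburger
  then show ?thesis unfolding S6_def by auto
qed

lemma loc_embed:
  assumes "{(a, b), (a, c), (b, c)} \<subseteq> T" "T \<subseteq> S"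
  shows "embed S T (loc T X \<sigma> a b c ra rb rc) = loc S X \<sigma> a b c ra rb rc"
  unfolding loc_def by (rule embed_embed[OF assms])

lemma supp_loc: "{(a, b), (a, c), (b, c)} \<subseteq> S \<Longrightarrow> supp S {(a, b), (a, c), (b, c)} (loc S X \<sigma> a b c ra rb rc)"
  unfolding loc_def by (rule supp_embed)

lemma BTE_at:
  fixes R R1 R2 R3 :: "('c, 'b::finite) Rfam"
  assumes bte: "BTE R R1 R2 R3 \<sigma>" and S: "finite S"
    and d: "p1 \<noteq> p2" "p1 \<noteq> p3" "p1 \<noteq> p4" "p2 \<noteq> p3" "p2 \<noteq> p4" "p3 \<noteq> p4"
    and sub: "{(p1, p2), (p1, p3), (p1, p4), (p2, p3), (p2, p4), (p3, p4)} \<subseteq> S"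
  shows "op_eq S
       (op_prod S [loc S R \<sigma> p1 p2 p3 r1 r2 r3,
                    loc S R1 (\<sigma> + 1) p1 p2 p4 r1 r2 r4,
                    loc S R2 \<sigma> p1 p3 p4 r1 r3 r4,
                    loc S R3 (\<sigma> + 1) p2 p3 p4 r2 r3 r4])
       (op_prod S [loc S R3 \<sigma> p2 p3 p4 r2 r3 r4,
                    loc S R2 (\<sigma> + 1) p1 p3 p4 r1 r3 r4,
                    loc S R1 \<sigma> p1 p2 p4 r1 r2 r4,
                    loc S R (\<sigma> + 1) p1 p2 p3 r1 r2 r3])"
proof -
  define g where "g = (\<lambda>p. if p = E 1 then p1 else if p = E 2 then p2 else if p = E 3 then p3 else p4)"
  let ?f = "pmap g"
  let ?T = "{(p1, p2), (p1, p3), (p1, p4), (p2, p3), (p2, p4), (p3, p4)}"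
  have g: "g (E 1) = p1" "g (E 2) = p2" "g (E 3) = p3" "g (E 4) = p4" "g (E (Suc 0)) = p1" by (simp_all add: g_def)
  have img: "?f ` S6 = ?T" by (simp add: S6_eq pmap_def g)
  have inj: "inj_on ?f S6" unfolding S6_eq inj_on_def using d by (auto simp: pmap_def g)
  have fin6: "finite S6" by (simp add: S6_eq)
  have e: "op_eq S6
       (op_prod S6 [loc S6 R \<sigma> (E 1) (E 2) (E 3) r1 r2 r3,
                    loc S6 R1 (\<sigma> + 1) (E 1) (E 2) (E 4) r1 r2 r4,
                    loc S6 R2 \<sigma> (E 1) (E 3) (E 4) r1 r3 r4,
                    loc S6 R3 (\<sigma> + 1) (E 2) (E 3) (E 4) r2 r3 r4])
       (op_prod S6 [loc S6 R3 \<sigma> (E 2) (E 3) (E 4) r2 r3 r4,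
                    loc S6 R2 (\<sigma> + 1) (E 1) (E 3) (E 4) r1 r3 r4,
                    loc S6 R1 \<sigma> (E 1) (E 2) (E 4) r1 r2 r4,
                    loc S6 R (\<sigma> + 1) (E 1) (E 2) (E 3) r1 r2 r3])"
    using bte unfolding BTE_def by blast
  have rl: "\<And>X c a b cc x y z. {(a, b), (a, cc), (b, cc)} \<subseteq> S6 \<Longrightarrow>
      ren ?f S6 (loc S6 X c a b cc x y z) = loc ?T X c (g a) (g b) (g cc) x y z"
    using ren_loc[OF inj] img by metis
  have s6: "{(E 1, E 2), (E 1, E 3), (E 2, E 3)} \<subseteq> S6" "{(E 1, E 2), (E 1, E 4), (E 2, E 4)} \<subseteq> S6"
    "{(E 1, E 3), (E 1, E 4), (E 3, E 4)} \<subseteq> S6" "{(E 2, E 3), (E 2, E 4), (E 3, E 4)} \<subseteq> S6"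
    by (auto simp: S6_eq)
  have e2: "op_eq ?T
       (op_prod ?T [loc ?T R \<sigma> p1 p2 p3 r1 r2 r3,
                    loc ?T R1 (\<sigma> + 1) p1 p2 p4 r1 r2 r4,
                    loc ?T R2 \<sigma> p1 p3 p4 r1 r3 r4,
                    loc ?T R3 (\<sigma> + 1) p2 p3 p4 r2 r3 r4])
       (op_prod ?T [loc ?T R3 \<sigma> p2 p3 p4 r2 r3 r4,
                    loc ?T R2 (\<sigma> + 1) p1 p3 p4 r1 r3 r4,
                    loc ?T R1 \<sigma> p1 p2 p4 r1 r2 r4,
                    loc ?T R (\<sigma> + 1) p1 p2 p3 r1 r2 r3])"
    using op_eq_trans[OF op_eq_sym[OF ren_prod[OF inj]] op_eq_trans[OF ren_cong[OF e] ren_prod[OF inj]]]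
    by (simp only: list.map rl[OF s6(1)] rl[OF s6(2)] rl[OF s6(3)] rl[OF s6(4)] g img)
  have TS: "?T \<subseteq> S" by (rule sub)
  have le: "\<And>X c a b cc x y z. {(a, b), (a, cc), (b, cc)} \<subseteq> ?T \<Longrightarrow>
      embed S ?T (loc ?T X c a b cc x y z) = loc S X c a b cc x y z"
    by (rule loc_embed[OF _ TS])
  have t: "{(p1, p2), (p1, p3), (p2, p3)} \<subseteq> ?T" "{(p1, p2), (p1, p4), (p2, p4)} \<subseteq> ?T"
    "{(p1, p3), (p1, p4), (p3, p4)} \<subseteq> ?T" "{(p2, p3), (p2, p4), (p3, p4)} \<subseteq> ?T" by auto
  show ?thesis
    using op_eq_trans[OF op_eq_sym[OF embed_prod[OF S TS]] op_eq_trans[OF embed_cong[OF e2] embed_prod[OF S TS]]]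
    by (simp only: list.map le[OF t(1)] le[OF t(2)] le[OF t(3)] le[OF t(4)])
qed

lemma supp_of_eq: "op_eq S P (embed S U X) \<Longrightarrow> U \<subseteq> S \<Longrightarrow> supp S U P"
  unfolding supp_def by blast

lemma op_eq_embed_sub:
  fixes X :: "('s, 'b) sop"
  assumes "op_eq S P (embed S U X)" "U \<subseteq> S'" "S' \<subseteq> S"
  shows "op_eq S' P (embed S' U X)"
  using op_eq_trans[OF op_eq_subset[OF assms(1,3)] embed_restrict[OF assms(2,3)]] .

lemma mult_restrict:
  fixes P :: "('s, 'b::finite) sop"
  assumes S: "finite S" and P: "supp S U P" and U: "U \<subseteq> S'" and S': "S' \<subseteq> S"
  shows "op_eq S' (op_mult S P X) (op_mult S' P X)"
  unfolding op_eq_def op_mult_def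
proof (intro ballI)
  fix x y :: "'s \<Rightarrow> 'b" assume x: "x \<in> cfg S'" and y: "y \<in> cfg S'"
  obtain P' where e: "op_eq S P (embed S U P')" using P by (auto simp: supp_def)
  have xS: "x \<in> cfg S" using x S' by (rule cfg_subset)
  have sub: "cfg S' \<subseteq> cfg S" using S' by (auto intro: cfg_subset)
  show "(\<Sum>z\<in>cfg S. P x z * X z y) = (\<Sum>z\<in>cfg S'. P x z * X z y)"
  proof (rule sum.mono_neutral_right[OF finite_cfg[OF S] sub])
    show "\<forall>i\<in>cfg S - cfg S'. P x i * X i y = 0"
    proof
      fix w :: "'s \<Rightarrow> 'b" assume w: "w \<in> cfg S - cfg S'"
      then obtain s where s: "s \<notin> S'" "w s \<noteq> undefined" by (auto simp: cfg_iff)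
      have sS: "s \<in> S" using w s by (auto simp: cfg_iff)
      have "x s = undefined" using x s by (auto simp: cfg_iff)
      moreover have "s \<in> S - U" using s sS U by auto
      ultimately have "\<not> (\<forall>s\<in>S - U. x s = w s)" using s by metis
      then have "embed S U P' x w = 0" unfolding embed_def by (simp only: if_False mult_zero_right)
      then have "P x w = 0" using e xS w by (auto simp: op_eq_def)
      then show "P x w * X w y = 0" by simp
    qed
  qed
qed

lemma trace3:
  fixes I1 :: "('s, 'b::finite) sop"
  assumes S: "finite S1" and d: "t1 \<noteq> t2" "t1 \<noteq> t3" "t2 \<noteq> t3"
    and t: "{t1, t2, t3} \<subseteq> S1" and Q: "Q = S1 - {t1, t2, t3}"
    and U: "U1 \<subseteq> Q" "U2 \<subseteq> Q" "U3 \<subseteq> Q"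
    and P1: "op_eq S1 P1 (embed S1 (insert t1 U1) I1)"
    and P2: "op_eq S1 P2 (embed S1 (insert t2 U2) I2)"
    and P3: "op_eq S1 P3 (embed S1 (insert t3 U3) I3)"
  shows "op_eq Q (ptrace S1 {t1, t2, t3} (op_mult S1 P1 (op_mult S1 P2 P3)))
     (op_mult Q (embed Q U1 (ptrace (insert t1 U1) {t1} I1))
        (op_mult Q (embed Q U2 (ptrace (insert t2 U2) {t2} I2)) (embed Q U3 (ptrace (insert t3 U3) {t3} I3))))"
proof -
  define Sa where "Sa = S1 - {t1}"
  define Sb where "Sb = Sa - {t2}"
  let ?J1 = "ptrace (insert t1 U1) {t1} I1"
  let ?J2 = "ptrace (insert t2 U2) {t2} I2"
  let ?J3 = "ptrace (insert t3 U3) {t3} I3"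
  have nt: "t1 \<notin> U1" "t1 \<notin> U2" "t1 \<notin> U3" "t2 \<notin> U1" "t2 \<notin> U2" "t2 \<notin> U3" "t3 \<notin> U1" "t3 \<notin> U2" "t3 \<notin> U3"
    using U Q by auto
  have sets: "S1 - ({t1} \<union> {t2, t3}) = Q" "Sa - ({t2} \<union> {t3}) = Q" "Sb - {t3} = Q" "Sa = S1 - {t1}" "Sb = Sa - {t2}"
    using Q by (auto simp: Sa_def Sb_def)
  have QSb: "Q \<subseteq> Sb" "Sb \<subseteq> Sa" "Sa \<subseteq> S1" using Q by (auto simp: Sa_def Sb_def)
  have finSa: "finite Sa" "finite Sb" using S by (auto simp: Sa_def Sb_def)
  have ins: "insert t1 U1 - {t1} = U1" "insert t2 U2 - {t2} = U2" "insert t3 U3 - {t3} = U3" using nt by auto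
  have in1: "insert t1 U1 \<subseteq> S1" "insert t2 U2 \<subseteq> S1" "insert t3 U3 \<subseteq> S1" using U t Q by auto
  have in2: "insert t2 U2 \<subseteq> Sa" "insert t3 U3 \<subseteq> Sa" "insert t3 U3 \<subseteq> Sb" "U1 \<subseteq> Sa" "U1 \<subseteq> Sb" "U2 \<subseteq> Sb"
    using U t Q d by (auto simp: Sa_def Sb_def)
  have s23: "supp S1 (insert t2 U2 \<union> insert t3 U3) (op_mult S1 P2 P3)"
    by (rule supp_mult[OF S]; rule supp_mono[OF supp_of_eq]) (use P2 P3 in1 in auto)
  have A1: "op_eq Sa (ptrace S1 {t1} (op_mult S1 P1 (op_mult S1 P2 P3)))
                    (op_mult Sa (embed Sa U1 ?J1) (op_mult S1 P2 P3))"
  proof -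
    have "op_eq (S1 - {t1}) (ptrace S1 {t1} (op_mult S1 P1 (op_mult S1 P2 P3)))
                    (op_mult (S1 - {t1}) (ptrace S1 {t1} P1) (op_mult S1 P2 P3))"
      by (rule ptrace_right[OF S _ s23]) (use t nt d in auto)
    also have "op_eq (S1 - {t1}) \<dots> (op_mult (S1 - {t1}) (embed (S1 - {t1}) U1 ?J1) (op_mult S1 P2 P3))"
      by (rule mult_cong[OF _ op_eq_refl], subst ins(1)[symmetric], rule ptrace_embed_eq[OF P1]) (use in1 in auto)
    finally show ?thesis unfolding Sa_def .
  qed
  have P2a: "op_eq Sa P2 (embed Sa (insert t2 U2) I2)" by (rule op_eq_embed_sub[OF P2 in2(1) QSb(3)])
  have P3a: "op_eq Sa P3 (embed Sa (insert t3 U3) I3)" by (rule op_eq_embed_sub[OF P3 in2(2) QSb(3)])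
  have P3b: "op_eq Sb P3 (embed Sb (insert t3 U3) I3)" by (rule op_eq_embed_sub[OF P3 in2(3)]) (use QSb in auto)
  have A2: "op_eq Sb (ptrace Sa {t2} (op_mult Sa (embed Sa U1 ?J1) (op_mult S1 P2 P3)))
                     (op_mult Sb (embed Sa U1 ?J1) (op_mult Sb (embed Sb U2 ?J2) P3))"
  proof -
    have "op_eq (Sa - {t2}) (ptrace Sa {t2} (op_mult Sa (embed Sa U1 ?J1) (op_mult S1 P2 P3)))
            (op_mult (Sa - {t2}) (embed Sa U1 ?J1) (ptrace Sa {t2} (op_mult S1 P2 P3)))"
      by (rule ptrace_left[OF finSa(1) _ supp_embed[OF in2(4)]]) (use t nt d in \<open>auto simp: Sa_def\<close>)
    also have "op_eq (Sa - {t2}) \<dots> (op_mult (Sa - {t2}) (embed Sa U1 ?J1) (ptrace Sa {t2} (op_mult Sa P2 P3)))"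
    proof (rule mult_cong[OF op_eq_refl ptrace_cong])
      show "{t2} \<subseteq> Sa" using t d by (auto simp: Sa_def)
      show "op_eq Sa (op_mult S1 P2 P3) (op_mult Sa P2 P3)"
        by (rule mult_restrict[OF S supp_of_eq[OF P2 in1(2)] in2(1) QSb(3)])
    qed
    also have "op_eq (Sa - {t2}) \<dots> (op_mult (Sa - {t2}) (embed Sa U1 ?J1) (op_mult (Sa - {t2}) (ptrace Sa {t2} P2) P3))"
      by (rule mult_cong[OF op_eq_refl ptrace_right[OF finSa(1) _ supp_of_eq[OF P3a in2(2)]]])
         (use t nt d in \<open>auto simp: Sa_def\<close>)
    also have "op_eq (Sa - {t2}) \<dots> (op_mult (Sa - {t2}) (embed Sa U1 ?J1) (op_mult (Sa - {t2}) (embed (Sa - {t2}) U2 ?J2) P3))"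
      by (rule mult_cong[OF op_eq_refl mult_cong[OF _ op_eq_refl]], subst ins(2)[symmetric], rule ptrace_embed_eq[OF P2a])
         (use in2 in auto)
    finally show ?thesis unfolding Sb_def .
  qed
  have sB1: "supp Sb U1 (embed Sa U1 ?J1)"
    by (rule supp_restrict[OF supp_embed[OF in2(4)] in2(5) QSb(2)])
  have A3: "op_eq Q (ptrace Sb {t3} (op_mult Sb (embed Sa U1 ?J1) (op_mult Sb (embed Sb U2 ?J2) P3)))
                    (op_mult Q (embed Sa U1 ?J1) (op_mult Q (embed Sb U2 ?J2) (embed Q U3 ?J3)))"
  proof -
    have t3: "{t3} \<subseteq> Sb" using t d by (auto simp: Sa_def Sb_def)
    have "op_eq (Sb - {t3}) (ptrace Sb {t3} (op_mult Sb (embed Sa U1 ?J1) (op_mult Sb (embed Sb U2 ?J2) P3)))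
            (op_mult (Sb - {t3}) (embed Sa U1 ?J1) (ptrace Sb {t3} (op_mult Sb (embed Sb U2 ?J2) P3)))"
      by (rule ptrace_left[OF finSa(2) t3 sB1]) (use nt in auto)
    also have "op_eq (Sb - {t3}) \<dots> (op_mult (Sb - {t3}) (embed Sa U1 ?J1)
                    (op_mult (Sb - {t3}) (embed Sb U2 ?J2) (ptrace Sb {t3} P3)))"
      by (rule mult_cong[OF op_eq_refl ptrace_left[OF finSa(2) t3 supp_embed[OF in2(6)]]]) (use nt in auto)
    also have "op_eq (Sb - {t3}) \<dots> (op_mult (Sb - {t3}) (embed Sa U1 ?J1)
                    (op_mult (Sb - {t3}) (embed Sb U2 ?J2) (embed (Sb - {t3}) U3 ?J3)))"
      by (rule mult_cong[OF op_eq_refl mult_cong[OF op_eq_refl]], subst ins(3)[symmetric], rule ptrace_embed_eq[OF P3b])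
         (use in2 in auto)
    finally show ?thesis unfolding sets(3) .
  qed
  have un1: "{t1, t2, t3} = {t1} \<union> {t2, t3}" "{t2, t3} = {t2} \<union> {t3}" by auto
  have "op_eq Q (ptrace S1 {t1, t2, t3} (op_mult S1 P1 (op_mult S1 P2 P3)))
                (ptrace Sa {t2, t3} (ptrace S1 {t1} (op_mult S1 P1 (op_mult S1 P2 P3))))"
    using ptrace_union[OF S, of "{t1}" "{t2, t3}"] t d unfolding un1(1)[symmetric] sets(1)[symmetric] sets(4)
    by (simp add: un1(1)[symmetric])
  also have "op_eq Q \<dots> (ptrace Sa {t2, t3} (op_mult Sa (embed Sa U1 ?J1) (op_mult S1 P2 P3)))"
    using ptrace_cong[OF _ A1, of "{t2, t3}"] t d unfolding un1(2) sets(2) by (auto simp: Sa_def)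
  also have "op_eq Q \<dots> (ptrace Sb {t3} (ptrace Sa {t2} (op_mult Sa (embed Sa U1 ?J1) (op_mult S1 P2 P3))))"
    using ptrace_union[OF finSa(1), of "{t2}" "{t3}"] t d unfolding un1(2) sets(2) sets(5)[symmetric]
    by (auto simp: Sa_def)
  also have "op_eq Q \<dots> (ptrace Sb {t3} (op_mult Sb (embed Sa U1 ?J1) (op_mult Sb (embed Sb U2 ?J2) P3)))"
    using ptrace_cong[OF _ A2, of "{t3}"] t d unfolding sets(3) by (auto simp: Sa_def Sb_def)
  also have "op_eq Q \<dots> (op_mult Q (embed Sa U1 ?J1) (op_mult Q (embed Sb U2 ?J2) (embed Q U3 ?J3)))"
    by (rule A3)
  also have "op_eq Q \<dots> (op_mult Q (embed Q U1 ?J1) (op_mult Q (embed Q U2 ?J2) (embed Q U3 ?J3)))"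
    by (intro mult_cong[OF embed_restrict] mult_cong[OF embed_restrict op_eq_refl])
       (use U QSb in auto)
  finally show ?thesis .
qed

lemma op3_bij:
  assumes d: "s1 \<noteq> s2" "s1 \<noteq> s3" "s2 \<noteq> s3"
  shows "bij_betw (\<lambda>z. (z s1, z s2, z s3)) (cfg {s1, s2, s3}) (UNIV :: ('b \<times> 'b \<times> 'b) set)"
proof (rule bij_betw_byWitness[where f' = "\<lambda>(a, b, c). (\<lambda>s. if s = s1 then a else if s = s2 then b else if s = s3 then c else undefined)"])
  show "\<forall>a\<in>cfg {s1, s2, s3}. (\<lambda>(a, b, c) s. if s = s1 then a else if s = s2 then b else if s = s3 then c else undefined) (a s1, a s2, a s3) = a"
    by (auto simp: cfg_iff fun_eq_iff)
  show "\<forall>a'\<in>UNIV. (\<lambda>z. (z s1, z s2, z s3)) ((\<lambda>(a, b, c) s. if s = s1 then a else if s = s2 then b else if s = s3 then c else undefined) a') = a'"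
    using d by auto
  show "(\<lambda>z. (z s1, z s2, z s3)) ` cfg {s1, s2, s3} \<subseteq> UNIV" by simp
  show "(\<lambda>(a, b, c) s. if s = s1 then a else if s = s2 then b else if s = s3 then c else undefined) ` UNIV \<subseteq> cfg {s1, s2, s3}"
    by (auto simp: cfg_iff)
qed

lemma op3_mult:
  fixes M N :: "'b::finite op3"
  assumes d: "s1 \<noteq> s2" "s1 \<noteq> s3" "s2 \<noteq> s3"
  shows "op_mult {s1, s2, s3} (op3_on (s1, s2, s3) M) (op3_on (s1, s2, s3) N) x y
       = (\<Sum>p\<in>UNIV. M (x s1, x s2, x s3) p * N p (y s1, y s2, y s3))"
  unfolding op_mult_def op3_on_def
  using sum.reindex_bij_betw[OF op3_bij[OF d], of "\<lambda>p. M (x s1, x s2, x s3) p * N p (y s1, y s2, y s3)"]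
  by simp

lemma op3_invertible:
  fixes M :: "'b::finite op3" and s1 s2 s3 :: 's
  assumes d: "s1 \<noteq> s2" "s1 \<noteq> s3" "s2 \<noteq> s3" and inv: "invertible3 M"
  shows "op_invertible {s1, s2, s3} (op3_on (s1, s2, s3) M)"
proof -
  obtain N where n1: "\<And>x y. (\<Sum>z\<in>UNIV. M x z * N z y) = (if x = y then 1 else 0)"
    and n2: "\<And>x y. (\<Sum>z\<in>UNIV. N x z * M z y) = (if x = y then 1 else 0)"
    using inv unfolding invertible3_def by blast
  have eqv: "(x s1, x s2, x s3) = (y s1, y s2, y s3) \<longleftrightarrow> x = y" if "x \<in> cfg {s1, s2, s3}" "y \<in> cfg {s1, s2, s3}" for x y :: "'s \<Rightarrow> 'b"
  proof
    assume h: "(x s1, x s2, x s3) = (y s1, y s2, y s3)"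
    show "x = y"
    proof
      fix s show "x s = y s" using h that by (cases "s = s1 \<or> s = s2 \<or> s = s3") (auto simp: cfg_iff)
    qed
  qed simp
  have "op_eq {s1, s2, s3} (op_mult {s1, s2, s3} (op3_on (s1, s2, s3) M) (op3_on (s1, s2, s3) N)) (op_id {s1, s2, s3})"
    unfolding op_eq_def
  proof (intro ballI)
    fix x y :: "'s \<Rightarrow> 'b" assume x: "x \<in> cfg {s1, s2, s3}" and y: "y \<in> cfg {s1, s2, s3}"
    show "op_mult {s1, s2, s3} (op3_on (s1, s2, s3) M) (op3_on (s1, s2, s3) N) x y = op_id {s1, s2, s3} x y"
      by (simp only: op3_mult[OF d] n1 op_id_def eqv[OF x y])
  qed
  moreover have "op_eq {s1, s2, s3} (op_mult {s1, s2, s3} (op3_on (s1, s2, s3) N) (op3_on (s1, s2, s3) M)) (op_id {s1, s2, s3})"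
    unfolding op_eq_def
  proof (intro ballI)
    fix x y :: "'s \<Rightarrow> 'b" assume x: "x \<in> cfg {s1, s2, s3}" and y: "y \<in> cfg {s1, s2, s3}"
    show "op_mult {s1, s2, s3} (op3_on (s1, s2, s3) N) (op3_on (s1, s2, s3) M) x y = op_id {s1, s2, s3} x y"
      by (simp only: op3_mult[OF d] n2 op_id_def eqv[OF x y])
  qed
  ultimately show ?thesis unfolding op_invertible_def by blast
qed

lemma prod4_right:
  fixes a :: "('s, 'b::finite) sop"
  assumes S: "finite S"
  shows "op_eq S (op_prod S [a, b, c, d]) (op_mult S (op_mult S a (op_mult S b c)) d)"
proof -
  have "op_eq S (op_prod S [a, b, c, d]) (op_mult S a (op_mult S b (op_mult S c d)))"
    unfolding prod_Cons prod_Nil by (intro mult_cong[OF op_eq_refl] mult_id_right[OF S])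
  also have "op_eq S \<dots> (op_mult S a (op_mult S (op_mult S b c) d))"
    by (rule mult_cong[OF op_eq_refl op_eq_sym[OF mult_assoc[OF S]]])
  also have "op_eq S \<dots> (op_mult S (op_mult S a (op_mult S b c)) d)"
    by (rule op_eq_sym[OF mult_assoc[OF S]])
  finally show ?thesis .
qed

lemma prod4_left:
  fixes a :: "('s, 'b::finite) sop"
  assumes S: "finite S"
  shows "op_eq S (op_prod S [a, b, c, d]) (op_mult S a (op_mult S b (op_mult S c d)))"
  unfolding prod_Cons prod_Nil by (intro mult_cong[OF op_eq_refl] mult_id_right[OF S])

lemma finite_Rsl[simp]: "finite (Rsl L a b)"
proof -
  have "Rsl L a b = (\<lambda>l. (A l, a)) ` {..<2 * L} \<union> (\<lambda>l. (A l, b)) ` {..<2 * L}"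
    by (auto simp: Rsl_def)
  then show ?thesis by simp
qed

lemma mem_Rsl: "x \<in> Rsl L a b \<longleftrightarrow> (\<exists>l<2 * L. x = (A l, a) \<or> x = (A l, b))"
  by (auto simp: Rsl_def)

definition Q1 :: "nat \<Rightarrow> nat \<Rightarrow> slot set" where
  "Q1 L m = Rsl L (B m) (E 0) \<union> Rsl L (B m) (E 1) \<union> Rsl L (E 0) (E 1)"

definition S1 :: "nat \<Rightarrow> nat \<Rightarrow> slot set" where
  "S1 L m = Q1 L m \<union> {(B m, E 0), (B m, E 1), (E 0, E 1)}"

lemma finite_S1: "finite (S1 L m)" by (simp add: S1_def Q1_def)

lemma S1_minus: "S1 L m - {(B m, E 0), (B m, E 1), (E 0, E 1)} = Q1 L m"
  by (auto simp: S1_def Q1_def mem_Rsl)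

lemma loc_commutes:
  fixes X :: "('c, 'b::finite) Rfam"
  assumes "finite S" "{(a, b), (a, c), (b, c)} \<subseteq> S" "{(a', b'), (a', c'), (b', c')} \<subseteq> S"
    "{(a, b), (a, c), (b, c)} \<inter> {(a', b'), (a', c'), (b', c')} = {}"
  shows "commutes S (loc S X \<sigma> a b c ra rb rc) (loc S Y \<sigma>' a' b' c' ra' rb' rc')"
  by (rule supp_commutes[OF assms(1) supp_loc[OF assms(2)] supp_loc[OF assms(3)] assms(4)])

lemma col1: "((\<tau>::bit) + 1) + of_nat (l + 1) + 1 = \<tau> + of_nat (l + 1)"
proof -
  have "((\<tau>::bit) + 1) + of_nat (l + 1) + 1 = \<tau> + of_nat (l + 1) + (1 + 1)" by (simp only: add_ac)
  also have "(1 + 1 :: bit) = 0" by (metis bit_2_eq_0 one_add_one)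
  finally show ?thesis by (simp only: add_0_right)
qed

lemma prod_embed_loc:
  fixes X :: "('c, 'b::finite) Rfam"
  assumes S: "finite S" and U: "U \<subseteq> S" and sub: "\<And>l. l \<in> set xs \<Longrightarrow> {(A l, a), (A l, b), (a, b)} \<subseteq> U"
  shows "op_eq S (op_prod S (map (\<lambda>l. loc S X (c l) (A l) a b (rA l) ra rb) xs))
                 (embed S U (op_prod U (map (\<lambda>l. loc U X (c l) (A l) a b (rA l) ra rb) xs)))"
proof -
  have "op_eq S (embed S U (op_prod U (map (\<lambda>l. loc U X (c l) (A l) a b (rA l) ra rb) xs)))
       (op_prod S (map (embed S U) (map (\<lambda>l. loc U X (c l) (A l) a b (rA l) ra rb) xs)))"
    by (rule embed_prod[OF S U])
  also have "map (embed S U) (map (\<lambda>l. loc U X (c l) (A l) a b (rA l) ra rb) xs)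
           = map (\<lambda>l. loc S X (c l) (A l) a b (rA l) ra rb) xs"
    using sub by (auto simp: loc_embed[OF _ U])
  finally show ?thesis by (rule op_eq_sym)
qed

lemma boldR_alt:
  "boldR X L rA \<sigma> \<alpha> \<beta> ra rb = ptrace (insert (\<alpha>, \<beta>) (Rsl L \<alpha> \<beta>)) {(\<alpha>, \<beta>)}
     (op_prod (insert (\<alpha>, \<beta>) (Rsl L \<alpha> \<beta>))
        (map (\<lambda>l. loc (insert (\<alpha>, \<beta>) (Rsl L \<alpha> \<beta>)) X (\<sigma> + of_nat (l + 1)) (A l) \<alpha> \<beta> (rA l) ra rb) [0..<2 * L]))"
  by (simp only: boldR_def Let_def Un_insert_right Un_empty_right)

lemma boldYBE:
  fixes R R1 R2 R3 :: "('c, 'b::finite) Rfam"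
  assumes bte: "\<And>\<sigma>. BTE R R1 R2 R3 \<sigma>" and inv: "\<And>\<sigma> r1 r2 r3. invertible3 (R3 \<sigma> r1 r2 r3)"
  shows "op_eq (Q1 L m)
    (op_mult (Q1 L m) (embed (Q1 L m) (Rsl L (B m) (E 0)) (boldR R L rA (\<tau> + 1) (B m) (E 0) ra rb))
      (op_mult (Q1 L m) (embed (Q1 L m) (Rsl L (B m) (E 1)) (boldR R1 L rA \<tau> (B m) (E 1) ra rc))
                 (embed (Q1 L m) (Rsl L (E 0) (E 1)) (boldR R2 L rA (\<tau> + 1) (E 0) (E 1) rb rc))))
    (op_mult (Q1 L m) (embed (Q1 L m) (Rsl L (E 0) (E 1)) (boldR R2 L rA \<tau> (E 0) (E 1) rb rc))
      (op_mult (Q1 L m) (embed (Q1 L m) (Rsl L (B m) (E 1)) (boldR R1 L rA (\<tau> + 1) (B m) (E 1) ra rc))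
                 (embed (Q1 L m) (Rsl L (B m) (E 0)) (boldR R L rA \<tau> (B m) (E 0) ra rb))))"
proof -
  define S where "S = S1 L m"
  define n where "n = 2 * L"
  have finS: "finite S" by (simp add: S_def finite_S1)
  define Rl where "Rl = (\<lambda>c l. loc S R c (A l) (B m) (E 0) (rA l) ra rb)"
  define Dl where "Dl = (\<lambda>c l. loc S R1 c (A l) (B m) (E 1) (rA l) ra rc)"
  define DDl where "DDl = (\<lambda>c l. loc S R2 c (A l) (E 0) (E 1) (rA l) rb rc)"
  define G where "G = (\<lambda>c. loc S R3 c (B m) (E 0) (E 1) ra rb rc)"
  define c where "c = (\<lambda>l::nat. (\<tau> + 1) + of_nat (l + 1) :: bit)"
  define d where "d = (\<lambda>l::nat. \<tau> + of_nat (l + 1) :: bit)"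
  define X where "X = (\<lambda>l. op_mult S (Rl (c l) l) (op_mult S (Dl (d l) l) (DDl (c l) l)))"
  define Y where "Y = (\<lambda>l. op_mult S (DDl (d l) l) (op_mult S (Dl (c l) l) (Rl (d l) l)))"
  have cd: "c l + 1 = d l" for l unfolding c_def d_def by (rule col1)
  have subS: "{(A l, B m), (A l, E 0), (A l, E 1), (B m, E 0), (B m, E 1), (E 0, E 1)} \<subseteq> S" if "l < n" for l
    using that unfolding S_def S1_def Q1_def n_def Rsl_def by blast
  have stepa: "op_eq S (op_mult S (X l) (G (d l))) (op_mult S (G (c l)) (Y l))" if l: "l < n" for l
  proof -
    have b: "op_eq S
       (op_prod S [Rl (c l) l, Dl (c l + 1) l, DDl (c l) l, G (c l + 1)])
       (op_prod S [G (c l), DDl (c l + 1) l, Dl (c l) l, Rl (c l + 1) l])"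
      unfolding Rl_def Dl_def DDl_def G_def
      by (rule BTE_at[OF bte finS _ _ _ _ _ _ subS[OF l]]) simp_all
    have "op_eq S (op_mult S (X l) (G (d l))) (op_prod S [Rl (c l) l, Dl (c l + 1) l, DDl (c l) l, G (c l + 1)])"
      unfolding X_def cd by (rule op_eq_sym[OF prod4_right[OF finS]])
    also have "op_eq S \<dots> (op_prod S [G (c l), DDl (c l + 1) l, Dl (c l) l, Rl (c l + 1) l])" by (rule b)
    also have "op_eq S \<dots> (op_mult S (G (c l)) (Y l))"
      unfolding Y_def cd by (rule prod4_left[OF finS])
    finally show ?thesis .
  qed
  define G' where "G' = (\<lambda>i::nat. G (\<tau> + of_nat i))"
  have G'S: "G' (Suc i) = G (d i)" for i by (simp only: G'_def d_def Suc_eq_plus1)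
  have G'c: "G' i = G (c i)" for i by (simp only: G'_def c_def bit_shift[symmetric])
  have G'n: "G' n = G \<tau>" by (simp only: G'_def n_def bit_of_nat_even add_0_right)
  have G'0: "G' 0 = G \<tau>" by (simp only: G'_def of_nat_0 add_0_right)
  have tel: "op_eq S (op_mult S (op_prod S (map X [0..<n])) (G \<tau>)) (op_mult S (G \<tau>) (op_prod S (map Y [0..<n])))"
  proof -
    have "op_eq S (op_mult S (X i) (G' (Suc i))) (op_mult S (G' i) (Y i))" if "i < n" for i
      unfolding G'S unfolding G'c by (rule stepa[OF that])
    from telescope[OF finS, of n X G' Y, OF this] show ?thesis unfolding G'n G'0 .
  qed
  have tS: "{(A i, B m), (A i, E 0), (B m, E 0)} \<subseteq> S" "{(A i, B m), (A i, E 1), (B m, E 1)} \<subseteq> S"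
     "{(A i, E 0), (A i, E 1), (E 0, E 1)} \<subseteq> S" if "i < n" for i
    using subS[OF that] by auto
  have cRD: "commutes S (Rl x i) (Dl y j)" "commutes S (Dl y j) (Rl x i)"
    "commutes S (Rl x i) (DDl y j)" "commutes S (DDl y j) (Rl x i)"
    "commutes S (Dl x i) (DDl y j)" "commutes S (DDl y j) (Dl x i)"
    if "i < n" "j < n" "i \<noteq> j" for i j x y
  proof -
    have ij: "i \<noteq> j" "j \<noteq> i" using that(3) by auto
    show "commutes S (Rl x i) (Dl y j)" unfolding Rl_def Dl_def
      by (rule loc_commutes[OF finS tS(1)[OF that(1)] tS(2)[OF that(2)]]) (use ij in auto)
    show "commutes S (Dl y j) (Rl x i)" unfolding Rl_def Dl_def
      by (rule loc_commutes[OF finS tS(2)[OF that(2)] tS(1)[OF that(1)]]) (use ij in auto)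
    show "commutes S (Rl x i) (DDl y j)" unfolding Rl_def DDl_def
      by (rule loc_commutes[OF finS tS(1)[OF that(1)] tS(3)[OF that(2)]]) (use ij in auto)
    show "commutes S (DDl y j) (Rl x i)" unfolding Rl_def DDl_def
      by (rule loc_commutes[OF finS tS(3)[OF that(2)] tS(1)[OF that(1)]]) (use ij in auto)
    show "commutes S (Dl x i) (DDl y j)" unfolding Dl_def DDl_def
      by (rule loc_commutes[OF finS tS(2)[OF that(1)] tS(3)[OF that(2)]]) (use ij in auto)
    show "commutes S (DDl y j) (Dl x i)" unfolding Dl_def DDl_def
      by (rule loc_commutes[OF finS tS(3)[OF that(2)] tS(2)[OF that(1)]]) (use ij in auto)
  qed
  define PR where "PR = op_prod S (map (\<lambda>l. Rl (c l) l) [0..<n])"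
  define PD where "PD = op_prod S (map (\<lambda>l. Dl (d l) l) [0..<n])"
  define PDD where "PDD = op_prod S (map (\<lambda>l. DDl (c l) l) [0..<n])"
  define PR' where "PR' = op_prod S (map (\<lambda>l. Rl (d l) l) [0..<n])"
  define PD' where "PD' = op_prod S (map (\<lambda>l. Dl (c l) l) [0..<n])"
  define PDD' where "PDD' = op_prod S (map (\<lambda>l. DDl (d l) l) [0..<n])"
  have rX: "op_eq S (op_prod S (map X [0..<n])) (op_mult S PR (op_mult S PD PDD))"
  proof -
    have "op_eq S (op_prod S (map X [0..<n]))
        (op_mult S PR (op_prod S (map (\<lambda>l. op_mult S (Dl (d l) l) (DDl (c l) l)) [0..<n])))"
      unfolding X_def PR_def
      by (rule reorder[OF finS], rule commutes_sym, rule commutes_mult[OF finS]; rule cRD) auto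
    also have "op_eq S \<dots> (op_mult S PR (op_mult S PD PDD))"
      unfolding PD_def PDD_def
      by (rule mult_cong[OF op_eq_refl reorder[OF finS]], rule cRD) auto
    finally show ?thesis .
  qed
  have rY: "op_eq S (op_prod S (map Y [0..<n])) (op_mult S PDD' (op_mult S PD' PR'))"
  proof -
    have "op_eq S (op_prod S (map Y [0..<n]))
        (op_mult S PDD' (op_prod S (map (\<lambda>l. op_mult S (Dl (c l) l) (Rl (d l) l)) [0..<n])))"
      unfolding Y_def PDD'_def
      by (rule reorder[OF finS], rule commutes_sym, rule commutes_mult[OF finS]; rule cRD) auto
    also have "op_eq S \<dots> (op_mult S PDD' (op_mult S PD' PR'))"
      unfolding PD'_def PR'_def
      by (rule mult_cong[OF op_eq_refl reorder[OF finS]], rule cRD) auto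
    finally show ?thesis .
  qed
  have main: "op_eq S (op_mult S (op_mult S PR (op_mult S PD PDD)) (G \<tau>)) (op_mult S (G \<tau>) (op_mult S PDD' (op_mult S PD' PR')))"
    using op_eq_trans[OF op_eq_trans[OF mult_cong[OF op_eq_sym[OF rX] op_eq_refl] tel] mult_cong[OF op_eq_refl rY]] .
  let ?T3 = "{(B m, E 0), (B m, E 1), (E 0, E 1)}"
  have T3S: "?T3 \<subseteq> S" by (auto simp: S_def S1_def)
  have ginv: "op_invertible ?T3 (op3_on ((B m, E 0), (B m, E 1), (E 0, E 1)) (R3 \<tau> ra rb rc))"
    by (rule op3_invertible[OF _ _ _ inv]) simp_all
  obtain Gi where Gi: "supp S ?T3 Gi"
    and gi1: "op_eq S (op_mult S (embed S ?T3 (op3_on ((B m, E 0), (B m, E 1), (E 0, E 1)) (R3 \<tau> ra rb rc))) Gi) (op_id S)"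
    and gi2: "op_eq S (op_mult S Gi (embed S ?T3 (op3_on ((B m, E 0), (B m, E 1), (E 0, E 1)) (R3 \<tau> ra rb rc)))) (op_id S)"
    using invertible_embed[OF finS T3S ginv] by blast
  have Gsupp: "supp S ?T3 (G \<tau>)" unfolding G_def by (rule supp_loc[OF T3S])
  have conj: "op_eq (S - ?T3) (ptrace S ?T3 (op_mult S PR (op_mult S PD PDD))) (ptrace S ?T3 (op_mult S PDD' (op_mult S PD' PR')))"
    by (rule ptrace_conj[OF finS Gsupp Gi _ _ main]) (use gi1 gi2 in \<open>simp_all only: G_def loc_def\<close>)
  have SQ: "S - ?T3 = Q1 L m" unfolding S_def by (rule S1_minus)
  have setsub: "l \<in> set [0..<n] \<Longrightarrow> {(A l, a), (A l, b), (a, b)} \<subseteq> insert (a, b) (Rsl L a b)" for l a b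
    by (auto simp: n_def mem_Rsl)
  have insS: "insert (B m, E 0) (Rsl L (B m) (E 0)) \<subseteq> S" "insert (B m, E 1) (Rsl L (B m) (E 1)) \<subseteq> S"
     "insert (E 0, E 1) (Rsl L (E 0) (E 1)) \<subseteq> S"
    by (auto simp: S_def S1_def Q1_def)
  have UQ: "Rsl L (B m) (E 0) \<subseteq> Q1 L m" "Rsl L (B m) (E 1) \<subseteq> Q1 L m" "Rsl L (E 0) (E 1) \<subseteq> Q1 L m"
    by (auto simp: Q1_def)
  have QS: "Q1 L m = S - {(B m, E 0), (B m, E 1), (E 0, E 1)}" unfolding S_def by (rule S1_minus[symmetric])
  have QS': "Q1 L m = S - {(E 0, E 1), (B m, E 1), (B m, E 0)}" using QS by (simp only: insert_commute)
  have eR: "\<And>cc. op_eq S (op_prod S (map (\<lambda>l. Rl (cc l) l) [0..<n]))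
      (embed S (insert (B m, E 0) (Rsl L (B m) (E 0))) (op_prod (insert (B m, E 0) (Rsl L (B m) (E 0)))
         (map (\<lambda>l. loc (insert (B m, E 0) (Rsl L (B m) (E 0))) R (cc l) (A l) (B m) (E 0) (rA l) ra rb) [0..<n])))"
    unfolding Rl_def by (rule prod_embed_loc[OF finS insS(1) setsub])
  have eD: "\<And>cc. op_eq S (op_prod S (map (\<lambda>l. Dl (cc l) l) [0..<n]))
      (embed S (insert (B m, E 1) (Rsl L (B m) (E 1))) (op_prod (insert (B m, E 1) (Rsl L (B m) (E 1)))
         (map (\<lambda>l. loc (insert (B m, E 1) (Rsl L (B m) (E 1))) R1 (cc l) (A l) (B m) (E 1) (rA l) ra rc) [0..<n])))"
    unfolding Dl_def by (rule prod_embed_loc[OF finS insS(2) setsub])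
  have eDD: "\<And>cc. op_eq S (op_prod S (map (\<lambda>l. DDl (cc l) l) [0..<n]))
      (embed S (insert (E 0, E 1) (Rsl L (E 0) (E 1))) (op_prod (insert (E 0, E 1) (Rsl L (E 0) (E 1)))
         (map (\<lambda>l. loc (insert (E 0, E 1) (Rsl L (E 0) (E 1))) R2 (cc l) (A l) (E 0) (E 1) (rA l) rb rc) [0..<n])))"
    unfolding DDl_def by (rule prod_embed_loc[OF finS insS(3) setsub])
  have bl: "\<And>X a b r1 r2 \<sigma>. ptrace (insert (a, b) (Rsl L a b)) {(a, b)} (op_prod (insert (a, b) (Rsl L a b))
         (map (\<lambda>l. loc (insert (a, b) (Rsl L a b)) X (\<sigma> + of_nat (l + 1)) (A l) a b (rA l) r1 r2) [0..<n]))
       = boldR X L rA \<sigma> a b r1 r2"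
    by (simp only: boldR_alt n_def)
  have L3: "op_eq (Q1 L m) (ptrace S ?T3 (op_mult S PR (op_mult S PD PDD)))
    (op_mult (Q1 L m) (embed (Q1 L m) (Rsl L (B m) (E 0)) (boldR R L rA (\<tau> + 1) (B m) (E 0) ra rb))
      (op_mult (Q1 L m) (embed (Q1 L m) (Rsl L (B m) (E 1)) (boldR R1 L rA \<tau> (B m) (E 1) ra rc))
                 (embed (Q1 L m) (Rsl L (E 0) (E 1)) (boldR R2 L rA (\<tau> + 1) (E 0) (E 1) rb rc))))"
    using trace3[OF finS _ _ _ T3S QS UQ(1) UQ(2) UQ(3) eR[of c, folded PR_def] eD[of d, folded PD_def] eDD[of c, folded PDD_def]]
    unfolding c_def d_def bl by simp
  have R3': "op_eq (Q1 L m) (ptrace S ?T3 (op_mult S PDD' (op_mult S PD' PR')))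
    (op_mult (Q1 L m) (embed (Q1 L m) (Rsl L (E 0) (E 1)) (boldR R2 L rA \<tau> (E 0) (E 1) rb rc))
      (op_mult (Q1 L m) (embed (Q1 L m) (Rsl L (B m) (E 1)) (boldR R1 L rA (\<tau> + 1) (B m) (E 1) ra rc))
                 (embed (Q1 L m) (Rsl L (B m) (E 0)) (boldR R L rA \<tau> (B m) (E 0) ra rb))))"
  proof -
    have T3': "{(E 0, E 1), (B m, E 1), (B m, E 0)} = ?T3" by auto
    have "{(E 0, E 1), (B m, E 1), (B m, E 0)} \<subseteq> S" using T3S by auto
    from trace3[OF finS _ _ _ this QS' UQ(3) UQ(2) UQ(1) eDD[of d, folded PDD'_def] eD[of c, folded PD'_def] eR[of d, folded PR'_def]]
    show ?thesis unfolding c_def d_def bl T3' by simp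
  qed
  show ?thesis
    using op_eq_trans[OF op_eq_sym[OF L3] op_eq_trans[OF conj[unfolded SQ] R3']] .
qed

definition swp :: "plane \<Rightarrow> plane" where
  "swp p = (if p = E 0 then E 1 else if p = E 1 then E 0 else p)"

lemma swp_simps[simp]: "swp (A l) = A l" "swp (B m) = B m" "swp (E 0) = E 1" "swp (E 1) = E 0"
  by (simp_all add: swp_def)

lemma pmap_apply: "pmap g (a, b) = (g a, g b)" by (simp add: pmap_def)

lemma swp_swp: "swp (swp p) = p" by (simp add: swp_def)

lemma inj_pmap_swp: "inj_on (pmap swp) X"
  by (rule inj_onI) (auto simp: pmap_def split: prod.splits dest: arg_cong[where f = swp] simp: swp_swp)

lemma pmap_Rsl: "pmap swp ` Rsl L a b = Rsl L (swp a) (swp b)"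
  by (force simp: Rsl_def pmap_def)

lemma pmap_Wsl: "pmap swp ` Wsl L M = Wsl L M"
  by (force simp: Wsl_def pmap_def)

lemma pmap_fix_Wsl: "s \<in> Wsl L M \<Longrightarrow> pmap swp s = s"
  by (auto simp: Wsl_def pmap_def)

lemma boldR_ren:
  fixes X :: "('c, 'b::finite) Rfam"
  shows "op_eq (Rsl L (B m) (E 1)) (ren (pmap swp) (Rsl L (B m) (E 0)) (boldR X L rA \<sigma> (B m) (E 0) ra rb))
                (boldR X L rA \<sigma> (B m) (E 1) ra rb)"
proof -
  let ?f = "pmap swp"
  let ?V = "insert (B m, E 0) (Rsl L (B m) (E 0))"
  let ?V' = "insert (B m, E 1) (Rsl L (B m) (E 1))"
  have inj: "inj_on ?f ?V" by (rule inj_pmap_swp)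
  have fV: "?f ` ?V = ?V'" by (simp only: image_insert pmap_Rsl pmap_apply swp_simps)
  have ft: "?f ` {(B m, E 0)} = {(B m, E 1)}" by (simp only: image_insert image_empty pmap_apply swp_simps)
  have VT: "?V - {(B m, E 0)} = Rsl L (B m) (E 0)" by (auto simp: mem_Rsl)
  have VT': "?V' - {(B m, E 1)} = Rsl L (B m) (E 1)" by (auto simp: mem_Rsl)
  have ll: "ren ?f ?V (loc ?V X c (A l) (B m) (E 0) x y z) = loc ?V' X c (A l) (B m) (E 1) x y z"
    if "l < 2 * L" for l c x y z
  proof -
    have "{(A l, B m), (A l, E 0), (B m, E 0)} \<subseteq> ?V" using that by (auto simp: mem_Rsl)
    from ren_loc[OF inj this] show ?thesis unfolding fV by simp
  qed
  have "op_eq (?f ` ?V - ?f ` {(B m, E 0)})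
      (ren ?f (?V - {(B m, E 0)}) (ptrace ?V {(B m, E 0)} (op_prod ?V (map (\<lambda>l. loc ?V X (\<sigma> + of_nat (l + 1)) (A l) (B m) (E 0) (rA l) ra rb) [0..<2 * L]))))
      (ptrace (?f ` ?V) (?f ` {(B m, E 0)}) (ren ?f ?V (op_prod ?V (map (\<lambda>l. loc ?V X (\<sigma> + of_nat (l + 1)) (A l) (B m) (E 0) (rA l) ra rb) [0..<2 * L]))))"
    by (rule ren_ptrace[OF inj]) simp
  also have "op_eq (?f ` ?V - ?f ` {(B m, E 0)}) \<dots>
      (ptrace (?f ` ?V) (?f ` {(B m, E 0)}) (op_prod (?f ` ?V) (map (ren ?f ?V) (map (\<lambda>l. loc ?V X (\<sigma> + of_nat (l + 1)) (A l) (B m) (E 0) (rA l) ra rb) [0..<2 * L]))))"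
    by (rule ptrace_cong[OF _ ren_prod[OF inj]]) auto
  also have "map (ren ?f ?V) (map (\<lambda>l. loc ?V X (\<sigma> + of_nat (l + 1)) (A l) (B m) (E 0) (rA l) ra rb) [0..<2 * L])
      = map (\<lambda>l. loc ?V' X (\<sigma> + of_nat (l + 1)) (A l) (B m) (E 1) (rA l) ra rb) [0..<2 * L]"
    by (auto simp: ll)
  finally show ?thesis unfolding fV ft VT VT' boldR_alt .
qed

definition TrP :: "nat \<Rightarrow> nat \<Rightarrow> slot set" where
  "TrP L k = {(A l, E k) | l. l < 2 * L}"

lemma finite_TrP[simp]: "finite (TrP L k)"
proof -
  have "TrP L k = (\<lambda>l. (A l, E k)) ` {..<2 * L}" by (auto simp: TrP_def)
  then show ?thesis by simp
qed

lemma finite_Wsl[simp]: "finite (Wsl L M)"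
proof -
  have "Wsl L M = (\<lambda>(l, m). (A l, B m)) ` ({..<2 * L} \<times> {..<2 * M})" by (auto simp: Wsl_def)
  then show ?thesis by simp
qed

lemma embed_self:
  fixes X :: "('s, 'b) sop"
  shows "op_eq W (embed W W X) X"
  unfolding op_eq_def embed_def by (simp add: restrict_cfg_id)

lemma gather_prod:
  fixes Z :: "nat \<Rightarrow> ('s, 'b::finite) sop"
  assumes S: "finite S" and V: "V \<subseteq> S" and U: "\<And>m. m \<in> set xs \<Longrightarrow> U m \<subseteq> V"
  shows "op_eq S (op_prod S (map (\<lambda>m. embed S (U m) (Z m)) xs)) (embed S V (op_prod V (map (\<lambda>m. embed V (U m) (Z m)) xs)))"
proof -
  have "op_eq S (embed S V (op_prod V (map (\<lambda>m. embed V (U m) (Z m)) xs)))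
      (op_prod S (map (embed S V) (map (\<lambda>m. embed V (U m) (Z m)) xs)))" by (rule embed_prod[OF S V])
  also have "map (embed S V) (map (\<lambda>m. embed V (U m) (Z m)) xs) = map (\<lambda>m. embed S (U m) (Z m)) xs"
    using U by (auto simp: embed_embed[OF _ V])
  finally show ?thesis by (rule op_eq_sym)
qed

lemma trace2:
  fixes I1 :: "('s, 'b::finite) sop"
  assumes S: "finite S" and Seq: "S = W \<union> T1 \<union> T2"
    and d: "W \<inter> T1 = {}" "W \<inter> T2 = {}" "T1 \<inter> T2 = {}"
    and P1: "op_eq S P1 (embed S (W \<union> T1) I1)" and P2: "op_eq S P2 (embed S (W \<union> T2) I2)"
  shows "op_eq W (ptrace S (T1 \<union> T2) (op_mult S P1 P2)) (op_mult W (ptrace (W \<union> T1) T1 I1) (ptrace (W \<union> T2) T2 I2))"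
proof -
  let ?J1 = "ptrace (W \<union> T1) T1 I1" and ?J2 = "ptrace (W \<union> T2) T2 I2"
  have e1: "S - (T1 \<union> T2) = W" "S - T1 - T2 = W" "(W \<union> T1) - T1 = W" "(W \<union> T2) - T2 = W"
    "S - T1 = W \<union> T2" using Seq d by auto
  have u: "T1 \<union> T2 \<subseteq> S" using Seq by auto
  have t1: "T1 \<subseteq> S" and t2: "T2 \<subseteq> S - T1" using Seq d by auto
  have w1: "W \<union> T1 \<subseteq> S" and w2: "W \<union> T2 \<subseteq> S" using Seq by auto
  have s2: "supp S (W \<union> T2) P2" by (rule supp_of_eq[OF P2 w2])
  have "op_eq W (ptrace S (T1 \<union> T2) (op_mult S P1 P2)) (ptrace (S - T1) T2 (ptrace S T1 (op_mult S P1 P2)))"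
    using ptrace_union[OF S u d(3)] unfolding e1(1) .
  also have "op_eq W \<dots> (ptrace (S - T1) T2 (op_mult (S - T1) (embed (S - T1) W ?J1) P2))"
  proof -
    have "op_eq (S - T1) (ptrace S T1 (op_mult S P1 P2)) (op_mult (S - T1) (ptrace S T1 P1) P2)"
      by (rule ptrace_right[OF S t1 s2]) (use d in auto)
    also have "op_eq (S - T1) \<dots> (op_mult (S - T1) (embed (S - T1) W ?J1) P2)"
      by (rule mult_cong[OF _ op_eq_refl], subst e1(3)[symmetric], rule ptrace_embed_eq[OF P1]) (use w1 in auto)
    finally have "op_eq (S - T1) (ptrace S T1 (op_mult S P1 P2)) (op_mult (S - T1) (embed (S - T1) W ?J1) P2)" .
    from ptrace_cong[OF t2 this] show ?thesis unfolding e1(2) .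
  qed
  also have "op_eq W \<dots> (op_mult W (embed (S - T1) W ?J1) (ptrace (S - T1) T2 P2))"
  proof -
    have fin: "finite (S - T1)" using S by simp
    have "W \<subseteq> S - T1" using Seq d by auto
    from ptrace_left[OF fin t2 supp_embed[OF this], of ?J1 P2] d show ?thesis unfolding e1(2) by auto
  qed
  also have "op_eq W \<dots> (op_mult W (embed (S - T1) W ?J1) (embed W W ?J2))"
  proof (rule mult_cong[OF op_eq_refl])
    have P2a: "op_eq (S - T1) P2 (embed (S - T1) (W \<union> T2) I2)"
      by (rule op_eq_embed_sub[OF P2]) (use Seq d in auto)
    have "op_eq (S - T1 - T2) (ptrace (S - T1) T2 P2) (embed (S - T1 - T2) ((W \<union> T2) - T2) ?J2)"
      by (rule ptrace_embed_eq[OF P2a]) (use Seq d in auto)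
    then show "op_eq W (ptrace (S - T1) T2 P2) (embed W W ?J2)" unfolding e1(2) e1(4) .
  qed
  also have "op_eq W \<dots> (op_mult W ?J1 ?J2)"
  proof (rule mult_cong)
    have "op_eq W (embed (S - T1) W ?J1) (embed W W ?J1)" by (rule embed_restrict) (use Seq d in auto)
    then show "op_eq W (embed (S - T1) W ?J1) ?J1" using embed_self op_eq_trans by blast
  qed (rule embed_self)
  finally show ?thesis .
qed


lemma Tlayer_eq: "Tlayer X L M rA rB \<sigma> r = ptrace (Wsl L M \<union> TrP L 0) (TrP L 0)
   (op_prod (Wsl L M \<union> TrP L 0) (map (\<lambda>m. embed (Wsl L M \<union> TrP L 0) (Rsl L (B m) (E 0))
       (boldR X L rA (\<sigma> + of_nat (m + 1)) (B m) (E 0) (rB m) r)) [0..<2 * M]))"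
  by (simp only: Tlayer_def Let_def TrP_def)

lemma pmap_TrP: "pmap swp ` TrP L 0 = TrP L 1"
  by (force simp: TrP_def pmap_def)

lemma Tlayer_swap:
  fixes X :: "('c, 'b::finite) Rfam"
  shows "op_eq (Wsl L M) (Tlayer X L M rA rB \<sigma> r)
    (ptrace (Wsl L M \<union> TrP L 1) (TrP L 1)
      (op_prod (Wsl L M \<union> TrP L 1) (map (\<lambda>m. embed (Wsl L M \<union> TrP L 1) (Rsl L (B m) (E 1))
         (boldR X L rA (\<sigma> + of_nat (m + 1)) (B m) (E 1) (rB m) r)) [0..<2 * M])))"
proof -
  let ?f = "pmap swp"
  let ?W = "Wsl L M"
  let ?S0 = "?W \<union> TrP L 0" and ?S1 = "?W \<union> TrP L 1"
  let ?P0 = "op_prod ?S0 (map (\<lambda>m. embed ?S0 (Rsl L (B m) (E 0))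
       (boldR X L rA (\<sigma> + of_nat (m + 1)) (B m) (E 0) (rB m) r)) [0..<2 * M])"
  have inj: "inj_on ?f ?S0" by (rule inj_pmap_swp)
  have fS0: "?f ` ?S0 = ?S1" by (simp only: image_Un pmap_Wsl pmap_TrP)
  have W0: "?S0 - TrP L 0 = ?W" by (auto simp: Wsl_def TrP_def)
  have W1: "?S1 - TrP L 1 = ?W" by (auto simp: Wsl_def TrP_def)
  have "op_eq ?W (Tlayer X L M rA rB \<sigma> r) (ren ?f ?W (Tlayer X L M rA rB \<sigma> r))"
    by (rule op_eq_sym[OF ren_fix[OF pmap_fix_Wsl]])
  also have "op_eq ?W \<dots> (ptrace (?f ` ?S0) (?f ` TrP L 0) (ren ?f ?S0 ?P0))"
    using ren_ptrace[OF inj, of "TrP L 0" ?P0] unfolding Tlayer_eq W0 fS0 pmap_TrP W1 by simp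
  also have "op_eq ?W \<dots> (ptrace ?S1 (TrP L 1) (op_prod ?S1 (map (ren ?f ?S0) (map (\<lambda>m. embed ?S0 (Rsl L (B m) (E 0))
       (boldR X L rA (\<sigma> + of_nat (m + 1)) (B m) (E 0) (rB m) r)) [0..<2 * M]))))"
  proof -
    have "op_eq (?S1 - TrP L 1) (ptrace ?S1 (TrP L 1) (ren ?f ?S0 ?P0)) (ptrace ?S1 (TrP L 1) (op_prod ?S1 (map (ren ?f ?S0) (map (\<lambda>m. embed ?S0 (Rsl L (B m) (E 0))
       (boldR X L rA (\<sigma> + of_nat (m + 1)) (B m) (E 0) (rB m) r)) [0..<2 * M]))))"
      by (rule ptrace_cong[OF _ ren_prod[OF inj, unfolded fS0]]) (rule Un_upper2)
    then show ?thesis unfolding fS0 pmap_TrP W1 .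
  qed
  also have "op_eq ?W \<dots> (ptrace ?S1 (TrP L 1)
      (op_prod ?S1 (map (\<lambda>m. embed ?S1 (Rsl L (B m) (E 1))
         (boldR X L rA (\<sigma> + of_nat (m + 1)) (B m) (E 1) (rB m) r)) [0..<2 * M])))"
  proof -
    have "op_eq ?S1 (op_prod ?S1 (map (ren ?f ?S0) (map (\<lambda>m. embed ?S0 (Rsl L (B m) (E 0))
       (boldR X L rA (\<sigma> + of_nat (m + 1)) (B m) (E 0) (rB m) r)) [0..<2 * M])))
      (op_prod ?S1 (map (\<lambda>m. embed ?S1 (Rsl L (B m) (E 1))
         (boldR X L rA (\<sigma> + of_nat (m + 1)) (B m) (E 1) (rB m) r)) [0..<2 * M]))"
      unfolding map_map o_def
    proof (rule prod_cong)
      fix m assume "m \<in> set [0..<2 * M]"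
      then have sub: "Rsl L (B m) (E 0) \<subseteq> ?S0" by (auto simp: Rsl_def Wsl_def TrP_def)
      have e: "ren ?f ?S0 (embed ?S0 (Rsl L (B m) (E 0)) (boldR X L rA (\<sigma> + of_nat (m + 1)) (B m) (E 0) (rB m) r))
          = embed ?S1 (Rsl L (B m) (E 1)) (ren ?f (Rsl L (B m) (E 0)) (boldR X L rA (\<sigma> + of_nat (m + 1)) (B m) (E 0) (rB m) r))"
        unfolding ren_embed[OF inj sub] fS0 pmap_Rsl swp_simps ..
      have "op_eq ?S1 (embed ?S1 (Rsl L (B m) (E 1)) (ren ?f (Rsl L (B m) (E 0)) (boldR X L rA (\<sigma> + of_nat (m + 1)) (B m) (E 0) (rB m) r)))
          (embed ?S1 (Rsl L (B m) (E 1)) (boldR X L rA (\<sigma> + of_nat (m + 1)) (B m) (E 1) (rB m) r))"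
        by (rule embed_cong[OF boldR_ren])
      then show "op_eq ?S1 (ren ?f ?S0 (embed ?S0 (Rsl L (B m) (E 0)) (boldR X L rA (\<sigma> + of_nat (m + 1)) (B m) (E 0) (rB m) r)))
          (embed ?S1 (Rsl L (B m) (E 1)) (boldR X L rA (\<sigma> + of_nat (m + 1)) (B m) (E 1) (rB m) r))" unfolding e .
    qed
    from ptrace_cong[OF Un_upper2 this] show ?thesis unfolding W1 .
  qed
  finally show ?thesis .
qed

lemma lift3:
  fixes x :: "('s, 'b::finite) sop"
  assumes S: "finite S" and Q: "Q \<subseteq> S"
  shows "op_eq S (embed S Q (op_mult Q x (op_mult Q y z))) (op_mult S (embed S Q x) (op_mult S (embed S Q y) (embed S Q z)))"
proof -
  have "op_eq S (embed S Q (op_mult Q x (op_mult Q y z))) (op_mult S (embed S Q x) (embed S Q (op_mult Q y z)))"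
    by (rule op_eq_sym[OF embed_mult[OF S Q]])
  also have "op_eq S \<dots> (op_mult S (embed S Q x) (op_mult S (embed S Q y) (embed S Q z)))"
    by (rule mult_cong[OF op_eq_refl op_eq_sym[OF embed_mult[OF S Q]]])
  finally show ?thesis .
qed

lemma sets_basic:
  "Wsl L M \<inter> TrP L 0 = {}" "Wsl L M \<inter> TrP L 1 = {}" "TrP L 0 \<inter> TrP L 1 = {}"
  "Rsl L (E 0) (E 1) = TrP L 0 \<union> TrP L 1"
  "m < 2 * M \<Longrightarrow> Rsl L (B m) (E 0) \<subseteq> Wsl L M \<union> TrP L 0"
  "m < 2 * M \<Longrightarrow> Rsl L (B m) (E 1) \<subseteq> Wsl L M \<union> TrP L 1"
  "m < 2 * M \<Longrightarrow> Q1 L m \<subseteq> Wsl L M \<union> TrP L 0 \<union> TrP L 1"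
  "i \<noteq> j \<Longrightarrow> Rsl L (B i) (E 1) \<inter> Rsl L (B j) (E 0) = {}"
  "i \<noteq> j \<Longrightarrow> Rsl L (B i) (E 0) \<inter> Rsl L (B j) (E 1) = {}"
  by (auto simp: Wsl_def TrP_def Rsl_def Q1_def)


theorem mainTheorem2:
  fixes R R1 R2 R3 :: "('c, 'b::finite) Rfam"
    and L M :: nat and rA rB :: "nat \<Rightarrow> 'c"
  assumes "L \<ge> 1" and "M \<ge> 1"
    and "\<And>\<sigma>. BTE R R1 R2 R3 \<sigma>"
    and "\<And>\<sigma> r1 r2 r3. invertible3 (R3 \<sigma> r1 r2 r3)"
    and "\<And>\<sigma> r3 r4. op_invertible (Rsl L (E 0) (E 1)) (boldR R2 L rA \<sigma> (E 0) (E 1) r3 r4)"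
  shows "\<forall>\<sigma> r r'. op_eq (Wsl L M)
           (op_mult (Wsl L M) (Tlayer R L M rA rB \<sigma> r) (Tlayer R1 L M rA rB (\<sigma> + 1) r'))
           (op_mult (Wsl L M) (Tlayer R1 L M rA rB \<sigma> r') (Tlayer R L M rA rB (\<sigma> + 1) r))"
proof (intro allI)
  fix \<sigma> :: bit and r r' :: 'c
  note bte = assms(3) and inv3 = assms(4) and invb = assms(5)
  define W where "W = Wsl L M"
  define T0 where "T0 = TrP L 0"
  define T1 where "T1 = TrP L 1"
  define S where "S = W \<union> T0 \<union> T1"
  define n where "n = 2 * M"
  have finS: "finite S" by (simp add: S_def W_def T0_def T1_def)
  define Rm where "Rm = (\<lambda>c m. embed S (Rsl L (B m) (E 0)) (boldR R L rA c (B m) (E 0) (rB m) r))"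
  define Dm where "Dm = (\<lambda>c m. embed S (Rsl L (B m) (E 1)) (boldR R1 L rA c (B m) (E 1) (rB m) r'))"
  define Gc where "Gc = (\<lambda>c. embed S (Rsl L (E 0) (E 1)) (boldR R2 L rA c (E 0) (E 1) r r'))"
  define e where "e = (\<lambda>m::nat. \<sigma> + of_nat (m + 1))"
  define f where "f = (\<lambda>m::nat. (\<sigma> + 1) + of_nat (m + 1))"
  define X where "X = (\<lambda>m. op_mult S (Rm (e m) m) (Dm (f m) m))"
  define Y where "Y = (\<lambda>m. op_mult S (Dm (e m) m) (Rm (f m) m))"
  have RS0: "Rsl L (B m) (E 0) \<subseteq> W \<union> T0" "Rsl L (B m) (E 1) \<subseteq> W \<union> T1" "Q1 L m \<subseteq> S"
    "Rsl L (B m) (E 0) \<subseteq> S" "Rsl L (B m) (E 1) \<subseteq> S" if "m < n" for m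
    using sets_basic(5,6,7)[OF that[unfolded n_def]] by (auto simp: S_def W_def T0_def T1_def)
  have GS: "Rsl L (E 0) (E 1) \<subseteq> S" using sets_basic(4) by (auto simp: S_def T0_def T1_def)
  have ybe: "op_eq S (op_mult S (Rm (\<tau> + 1) m) (op_mult S (Dm \<tau> m) (Gc (\<tau> + 1))))
                     (op_mult S (Gc \<tau>) (op_mult S (Dm (\<tau> + 1) m) (Rm \<tau> m)))" if m: "m < n" for m \<tau>
  proof -
    let ?Q = "Q1 L m"
    have QS: "?Q \<subseteq> S" by (rule RS0(3)[OF m])
    have ee: "\<And>U Z. U \<subseteq> ?Q \<Longrightarrow> embed S ?Q (embed ?Q U Z) = embed S U Z" by (rule embed_embed[OF _ QS])
    have U: "Rsl L (B m) (E 0) \<subseteq> ?Q" "Rsl L (B m) (E 1) \<subseteq> ?Q" "Rsl L (E 0) (E 1) \<subseteq> ?Q" by (auto simp: Q1_def)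
    have y: "op_eq S (embed S ?Q (op_mult ?Q (embed ?Q (Rsl L (B m) (E 0)) (boldR R L rA (\<tau> + 1) (B m) (E 0) (rB m) r))
      (op_mult ?Q (embed ?Q (Rsl L (B m) (E 1)) (boldR R1 L rA \<tau> (B m) (E 1) (rB m) r'))
                 (embed ?Q (Rsl L (E 0) (E 1)) (boldR R2 L rA (\<tau> + 1) (E 0) (E 1) r r')))))
      (embed S ?Q (op_mult ?Q (embed ?Q (Rsl L (E 0) (E 1)) (boldR R2 L rA \<tau> (E 0) (E 1) r r'))
      (op_mult ?Q (embed ?Q (Rsl L (B m) (E 1)) (boldR R1 L rA (\<tau> + 1) (B m) (E 1) (rB m) r'))
                 (embed ?Q (Rsl L (B m) (E 0)) (boldR R L rA \<tau> (B m) (E 0) (rB m) r)))))"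
      by (rule embed_cong[OF boldYBE[OF bte inv3]])
    show ?thesis
      using op_eq_trans[OF op_eq_sym[OF lift3[OF finS QS]] op_eq_trans[OF y lift3[OF finS QS]]]
      unfolding ee[OF U(1)] ee[OF U(2)] ee[OF U(3)] Rm_def Dm_def Gc_def .
  qed
  have stepX: "op_eq S (op_mult S (X m) (Gc (e m))) (op_mult S (Gc (f m)) (Y m))" if m: "m < n" for m
  proof -
    have fe: "f m + 1 = e m" unfolding f_def e_def by (rule col1)
    have "op_eq S (op_mult S (X m) (Gc (e m))) (op_mult S (Rm (e m) m) (op_mult S (Dm (f m) m) (Gc (e m))))"
      unfolding X_def by (rule mult_assoc[OF finS])
    also have "op_eq S \<dots> (op_mult S (Gc (f m)) (Y m))"
      using ybe[OF m, of "f m"] unfolding fe Y_def .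
    finally show ?thesis .
  qed
  define G' where "G' = (\<lambda>i::nat. Gc (\<sigma> + of_nat i))"
  have G'S: "G' (Suc i) = Gc (e i)" for i by (simp only: G'_def e_def Suc_eq_plus1)
  have G'f: "G' i = Gc (f i)" for i by (simp only: G'_def f_def bit_shift[symmetric])
  have G'n: "G' n = Gc \<sigma>" by (simp only: G'_def n_def bit_of_nat_even add_0_right)
  have G'0: "G' 0 = Gc \<sigma>" by (simp only: G'_def of_nat_0 add_0_right)
  have tel: "op_eq S (op_mult S (op_prod S (map X [0..<n])) (Gc \<sigma>)) (op_mult S (Gc \<sigma>) (op_prod S (map Y [0..<n])))"
  proof -
    have "op_eq S (op_mult S (X i) (G' (Suc i))) (op_mult S (G' i) (Y i))" if "i < n" for i
      unfolding G'S unfolding G'f by (rule stepX[OF that])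
    from telescope[OF finS, of n X G' Y, OF this] show ?thesis unfolding G'n G'0 .
  qed
  have cDR: "commutes S (Dm x i) (Rm y j)" "commutes S (Rm y j) (Dm x i)" if "i < n" "j < n" "i \<noteq> j" for i j x y
  proof -
    have d1: "Rsl L (B i) (E 1) \<inter> Rsl L (B j) (E 0) = {}" by (rule sets_basic(8)[OF that(3)])
    have d2: "Rsl L (B j) (E 0) \<inter> Rsl L (B i) (E 1) = {}" using d1 by auto
    show "commutes S (Dm x i) (Rm y j)" unfolding Dm_def Rm_def
      by (rule supp_commutes[OF finS supp_embed[OF RS0(5)[OF that(1)]] supp_embed[OF RS0(4)[OF that(2)]] d1])
    show "commutes S (Rm y j) (Dm x i)" unfolding Dm_def Rm_def
      by (rule supp_commutes[OF finS supp_embed[OF RS0(4)[OF that(2)]] supp_embed[OF RS0(5)[OF that(1)]] d2])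
  qed
  define PR where "PR = op_prod S (map (\<lambda>m. Rm (e m) m) [0..<n])"
  define PD where "PD = op_prod S (map (\<lambda>m. Dm (f m) m) [0..<n])"
  define PR' where "PR' = op_prod S (map (\<lambda>m. Rm (f m) m) [0..<n])"
  define PD' where "PD' = op_prod S (map (\<lambda>m. Dm (e m) m) [0..<n])"
  have rX: "op_eq S (op_prod S (map X [0..<n])) (op_mult S PR PD)"
    unfolding X_def PR_def PD_def by (rule reorder[OF finS], rule cDR) auto
  have rY: "op_eq S (op_prod S (map Y [0..<n])) (op_mult S PD' PR')"
    unfolding Y_def PR'_def PD'_def by (rule reorder[OF finS], rule cDR) auto
  have main: "op_eq S (op_mult S (op_mult S PR PD) (Gc \<sigma>)) (op_mult S (Gc \<sigma>) (op_mult S PD' PR'))"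
    using op_eq_trans[OF op_eq_trans[OF mult_cong[OF op_eq_sym[OF rX] op_eq_refl] tel] mult_cong[OF op_eq_refl rY]] .
  obtain Gi where Gi: "supp S (Rsl L (E 0) (E 1)) Gi"
    and gi1: "op_eq S (op_mult S (Gc \<sigma>) Gi) (op_id S)" and gi2: "op_eq S (op_mult S Gi (Gc \<sigma>)) (op_id S)"
    using invertible_embed[OF finS GS invb] unfolding Gc_def by blast
  have conj: "op_eq (S - Rsl L (E 0) (E 1)) (ptrace S (Rsl L (E 0) (E 1)) (op_mult S PR PD))
       (ptrace S (Rsl L (E 0) (E 1)) (op_mult S PD' PR'))"
    by (rule ptrace_conj[OF finS _ Gi gi1 gi2 main]) (unfold Gc_def, rule supp_embed[OF GS])
  have SW: "S - Rsl L (E 0) (E 1) = W" and RT: "Rsl L (E 0) (E 1) = T0 \<union> T1"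
    by (auto simp: S_def W_def T0_def T1_def Wsl_def TrP_def Rsl_def)
  have d: "W \<inter> T0 = {}" "W \<inter> T1 = {}" "T0 \<inter> T1 = {}" "T1 \<inter> T0 = {}"
    by (auto simp: W_def T0_def T1_def Wsl_def TrP_def)
  have V0: "W \<union> T0 \<subseteq> S" and V1: "W \<union> T1 \<subseteq> S" by (auto simp: S_def)
  have U0: "\<And>m. m \<in> set [0..<n] \<Longrightarrow> Rsl L (B m) (E 0) \<subseteq> W \<union> T0" using RS0(1) by auto
  have U1: "\<And>m. m \<in> set [0..<n] \<Longrightarrow> Rsl L (B m) (E 1) \<subseteq> W \<union> T1" using RS0(2) by auto
  have gR: "\<And>c. op_eq S (op_prod S (map (\<lambda>m. Rm (c m) m) [0..<n]))
     (embed S (W \<union> T0) (op_prod (W \<union> T0) (map (\<lambda>m. embed (W \<union> T0) (Rsl L (B m) (E 0))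
        (boldR R L rA (c m) (B m) (E 0) (rB m) r)) [0..<n])))"
    unfolding Rm_def by (rule gather_prod[OF finS V0 U0])
  have gD: "\<And>c. op_eq S (op_prod S (map (\<lambda>m. Dm (c m) m) [0..<n]))
     (embed S (W \<union> T1) (op_prod (W \<union> T1) (map (\<lambda>m. embed (W \<union> T1) (Rsl L (B m) (E 1))
        (boldR R1 L rA (c m) (B m) (E 1) (rB m) r')) [0..<n])))"
    unfolding Dm_def by (rule gather_prod[OF finS V1 U1])
  have tr1: "op_eq W (ptrace S (T0 \<union> T1) (op_mult S PR PD))
     (op_mult W (Tlayer R L M rA rB \<sigma> r) (ptrace (W \<union> T1) T1 (op_prod (W \<union> T1) (map (\<lambda>m. embed (W \<union> T1) (Rsl L (B m) (E 1))
        (boldR R1 L rA (f m) (B m) (E 1) (rB m) r')) [0..<n]))))"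
    using trace2[OF finS S_def d(1,2,3) gR[of e, folded PR_def] gD[of f, folded PD_def]]
    unfolding Tlayer_eq W_def T0_def e_def n_def .
  have tr2: "op_eq W (ptrace S (T1 \<union> T0) (op_mult S PD' PR'))
     (op_mult W (Tlayer R1 L M rA rB \<sigma> r') (ptrace (W \<union> T0) T0 (op_prod (W \<union> T0) (map (\<lambda>m. embed (W \<union> T0) (Rsl L (B m) (E 0))
        (boldR R L rA (f m) (B m) (E 0) (rB m) r)) [0..<n]))))"
  proof -
    have Seq: "S = W \<union> T1 \<union> T0" by (auto simp: S_def)
    have sw: "op_eq W (ptrace (W \<union> T1) T1 (op_prod (W \<union> T1) (map (\<lambda>m. embed (W \<union> T1) (Rsl L (B m) (E 1))
        (boldR R1 L rA (e m) (B m) (E 1) (rB m) r')) [0..<n]))) (Tlayer R1 L M rA rB \<sigma> r')"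
      unfolding W_def T1_def e_def n_def by (rule op_eq_sym[OF Tlayer_swap])
    show ?thesis
      using op_eq_trans[OF trace2[OF finS Seq d(2,1,4) gD[of e, folded PD'_def] gR[of f, folded PR'_def]]
                          mult_cong[OF sw op_eq_refl]] .
  qed
  have sw1: "op_eq W (ptrace (W \<union> T1) T1 (op_prod (W \<union> T1) (map (\<lambda>m. embed (W \<union> T1) (Rsl L (B m) (E 1))
        (boldR R1 L rA (f m) (B m) (E 1) (rB m) r')) [0..<n]))) (Tlayer R1 L M rA rB (\<sigma> + 1) r')"
    unfolding W_def T1_def f_def n_def by (rule op_eq_sym[OF Tlayer_swap])
  have t0: "ptrace (W \<union> T0) T0 (op_prod (W \<union> T0) (map (\<lambda>m. embed (W \<union> T0) (Rsl L (B m) (E 0))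
        (boldR R L rA (f m) (B m) (E 0) (rB m) r)) [0..<n])) = Tlayer R L M rA rB (\<sigma> + 1) r"
    unfolding Tlayer_eq W_def T0_def f_def n_def ..
  have "op_eq W (op_mult W (Tlayer R L M rA rB \<sigma> r) (Tlayer R1 L M rA rB (\<sigma> + 1) r'))
                (ptrace S (T0 \<union> T1) (op_mult S PR PD))"
    using op_eq_sym[OF op_eq_trans[OF tr1 mult_cong[OF op_eq_refl sw1]]] .
  also have "op_eq W \<dots> (ptrace S (T1 \<union> T0) (op_mult S PD' PR'))"
  proof -
    have u: "T1 \<union> T0 = T0 \<union> T1" by auto
    show ?thesis using conj unfolding SW unfolding RT u .
  qed
  also have "op_eq W \<dots> (op_mult W (Tlayer R1 L M rA rB \<sigma> r') (Tlayer R L M rA rB (\<sigma> + 1) r))"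
    using tr2 unfolding t0 .
  finally show "op_eq (Wsl L M)
           (op_mult (Wsl L M) (Tlayer R L M rA rB \<sigma> r) (Tlayer R1 L M rA rB (\<sigma> + 1) r'))
           (op_mult (Wsl L M) (Tlayer R1 L M rA rB \<sigma> r') (Tlayer R L M rA rB (\<sigma> + 1) r))"
    unfolding W_def .
qed

end
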